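(* Let $T=\{\!\{T_1,\dots,T_m\}\!\}$ where each $T_j$ is a $G_j$-join tree with $G_j$ a finite subgraph of $\mathsf{Path}_{\mathbb Z}$. Then for every shift permutation $\sigma$ of $[m]$ and every $h\in[m]$: (i) $\Psi(T)\ge\Psi(T_{\sigma(1)})+\vec\Delta(G_{\sigma(2)},\dots,G_{\sigma(m)}\mid G_{\sigma(1)})$; (ii) $\Psi(T)\ge\Psi(T_{\sigma(h)})+\vec\Delta(G_{\sigma(h+1)},\dots,G_{\sigma(m)}\mid G_{\sigma(1)}\cup\dots\cup G_{\sigma(h)})$; (iii) $\Psi(T)\ge\Psi(T_j\ominus F_j)-\Delta(G_j\ominus F_j)+\vec\Delta(G_{\tilde\sigma_j(1)},\dots,G_{\tilde\sigma_j(m)})$, where $j:=\sigma(h)$ and $F_j:=G_{\sigma(1)}\cup\dots\cup G_{\sigma(h-1)}$.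
   Context: Graphs are finite simple graphs without isolated vertices; $\emptyset$ is the empty graph. $\mathsf{Path}_{\mathbb Z}$ has vertex set $\mathbb Z$ and edges $\{i-1,i\}$. $\Delta(G)$ = number of connected components; $G\ominus F$ = union of components of $G$ sharing no vertex with $F$; $\vec\Delta(H_1,\dots,H_r\mid F)=\sum_{l=1}^r\Delta(H_l\ominus(F\cup H_1\cup\dots\cup H_{l-1}))$ and $\vec\Delta(H_1,\dots,H_r)=\vec\Delta(H_1,\dots,H_r\mid\emptyset)$. Join trees: for finite $G\subset\mathsf{Path}_{\mathbb Z}$, a $G$-join tree is a finite rooted binary tree (each non-leaf has an ordered left and right child) with nodes labeled by subgraphs of $G$: leaves by single-edge subgraphs of $G$ or $\emptyset$, each non-leaf by the union of its children's labels, the root by $G$. $T_1\cup T_2$ is the join tree with a new root whose left subtree is $T_1$ and right subtree $T_2$. $\{\!\{T_1\}\!\}=T_1$ and $\{\!\{T_1,\dots,T_m\}\!\}=\{\!\{T_1,\dots,T_{m-1}\}\!\}\cup\{\!\{T_1,\dots,T_{m-2},T_m\}\!\}$ for $m\ge2$. For a $G$-join tree $S$ and a graph $F$, $S\ominus F$ is the $(G\ominus F)$-join tree obtained from $S$ by relabeling to $\emptyset$ every leaf whose label is an edge not in $G\ominus F$ (and relabeling each non-leaf by the union of its children's labels). Branch coverings and $\Psi$: for a $G$-join tree $S$ and a root-to-leaf path $b_1,\dots,b_\ell$, let $B_j$ ($j<\ell$) be the label of the child of $b_j$ other than $b_{j+1}$, and $B_\ell$ the label of leaf $b_\ell$; $\{B_1,\dots,B_\ell\}$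 is an $S$-branch covering. $\Psi(S)$ is the maximum of $\vec\Delta(C_1,\dots,C_r)$ over all $S$-branch coverings $\mathcal C$ and all enumerations $C_1,\dots,C_r$ (without repetition) of $\mathcal C$. Shift permutations: a permutation $\sigma$ of $[m]$ with $\sigma(j)\ge j-1$ for all $j$. For $I\subseteq[m]$ with $m\in I$, $I=\{i_1<\dots<i_p\}$, $i_0:=0$, let $\sigma_I(j)=i_h$ if $j=i_{h-1}+1$ for some $h$, and $\sigma_I(j)=j-1$ otherwise; every shift permutation equals $\sigma_I$ for exactly one such $I$. For $\sigma=\sigma_I$ and $j\in[m]$, $\tilde\sigma_j:=\sigma_{\tilde I_j}$ with $\tilde I_j=I\cup[i_{h-1}]$ if $j=i_h\in I$ and $\tilde I_j=I\cup[j-1]$ if $j\notin I$. *)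

theory Defs
  imports "HOL-Combinatorics.Permutations"
begin

text \<open>A finite simple graph without isolated vertices is represented by its edge set;
  each edge is a 2-element vertex set.  The empty graph is the empty edge set.\<close>

type_synonym graph = "int set set"

definition path_Z :: graph where
  "path_Z = {{i - 1, i} | i. True}"

definition subgraph_of_path :: "graph \<Rightarrow> bool" where
  "subgraph_of_path G \<longleftrightarrow> finite G \<and> G \<subseteq> path_Z"

definition verts :: "graph \<Rightarrow> int set" where
  "verts G = \<Union> G"

definition edge_adj :: "graph \<Rightarrow> (int set \<times> int set) set" where
  "edge_adj G = {(e, f). e \<in> G \<and> f \<in> G \<and> e \<inter> f \<noteq> {}}"

definition components :: "graph \<Rightarrow> graph set" where
  "components G = G // ((edge_adj G)\<^sup>*)"

definition n_comp :: "graph \<Rightarrow> nat" where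
  "n_comp G = card (components G)"

definition gminus :: "graph \<Rightarrow> graph \<Rightarrow> graph" where
  "gminus G F = \<Union> {C \<in> components G. verts C \<inter> verts F = {}}"

fun dvec_c :: "graph \<Rightarrow> graph list \<Rightarrow> nat" where
  "dvec_c F [] = 0"
| "dvec_c F (H # Hs) = n_comp (gminus H F) + dvec_c (F \<union> H) Hs"

definition dvec :: "graph list \<Rightarrow> nat" where
  "dvec Hs = dvec_c {} Hs"

datatype jtree = Leaf graph | Node jtree jtree

fun label :: "jtree \<Rightarrow> graph" where
  "label (Leaf E) = E"
| "label (Node a b) = label a \<union> label b"

fun leaf_labels :: "jtree \<Rightarrow> graph set" where
  "leaf_labels (Leaf E) = {E}"
| "leaf_labels (Node a b) = leaf_labels a \<union> leaf_labels b"

definition join_tree :: "graph \<Rightarrow> jtree \<Rightarrow> bool" where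
  "join_tree G S \<longleftrightarrow> (\<forall>L \<in> leaf_labels S. L = {} \<or> (\<exists>e \<in> G. L = {e})) \<and> label S = G"

function multi_join :: "jtree list \<Rightarrow> jtree" where
  "multi_join [] = Leaf {}"
| "multi_join [t] = t"
| "multi_join (t # u # ts) =
     Node (multi_join (butlast (t # u # ts)))
          (multi_join (butlast (butlast (t # u # ts)) @ [last (t # u # ts)]))"
  by pat_completeness auto
termination by (relation "measure length") auto

fun restrict_leaves :: "graph \<Rightarrow> jtree \<Rightarrow> jtree" where
  "restrict_leaves K (Leaf E) = Leaf (E \<inter> K)"
| "restrict_leaves K (Node a b) = Node (restrict_leaves K a) (restrict_leaves K b)"

definition tminus :: "jtree \<Rightarrow> graph \<Rightarrow> jtree" where
  "tminus S F = restrict_leaves (gminus (label S) F) S"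

text \<open>Branch coverings: for each root-to-leaf path, the set of labels of the siblings along
  the path together with the label of the final leaf.\<close>
fun branch_coverings :: "jtree \<Rightarrow> graph set set" where
  "branch_coverings (Leaf E) = {{E}}"
| "branch_coverings (Node a b) =
     {insert (label b) C | C. C \<in> branch_coverings a} \<union>
     {insert (label a) C | C. C \<in> branch_coverings b}"

definition Psi :: "jtree \<Rightarrow> nat" where
  "Psi S = Max {dvec Cs | Cs C. C \<in> branch_coverings S \<and> distinct Cs \<and> set Cs = C}"

definition shift_perm :: "nat \<Rightarrow> (nat \<Rightarrow> nat) \<Rightarrow> bool" where
  "shift_perm m \<sigma> \<longleftrightarrow> \<sigma> permutes {1..m} \<and> (\<forall>j \<in> {1..m}. \<sigma> j \<ge> j - 1)"

text \<open>With \<open>I = {i_1 < ... < i_p}\<close> and \<open>i_0 = 0\<close>, the list \<open>0 # sorted_list_of_set I\<close>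
  is \<open>[i_0, i_1, ..., i_p]\<close>.\<close>
definition sigma_I :: "nat set \<Rightarrow> nat \<Rightarrow> nat" where
  "sigma_I I j = (let xs = 0 # sorted_list_of_set I in
     if \<exists>h. 1 \<le> h \<and> h < length xs \<and> j = xs ! (h - 1) + 1
     then xs ! (THE h. 1 \<le> h \<and> h < length xs \<and> j = xs ! (h - 1) + 1)
     else j - 1)"

definition index_set :: "nat \<Rightarrow> (nat \<Rightarrow> nat) \<Rightarrow> nat set" where
  "index_set m \<sigma> = (THE I. I \<subseteq> {1..m} \<and> m \<in> I \<and> (\<forall>j \<in> {1..m}. \<sigma> j = sigma_I I j))"

definition tilde_I :: "nat set \<Rightarrow> nat \<Rightarrow> nat set" where
  "tilde_I I j = (let xs = 0 # sorted_list_of_set I in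
     if j \<in> I then I \<union> {1 .. xs ! ((THE h. 1 \<le> h \<and> h < length xs \<and> xs ! h = j) - 1)}
     else I \<union> {1 .. j - 1})"

definition sigma_tilde :: "nat \<Rightarrow> (nat \<Rightarrow> nat) \<Rightarrow> nat \<Rightarrow> (nat \<Rightarrow> nat)" where
  "sigma_tilde m \<sigma> j = sigma_I (tilde_I (index_set m \<sigma>) j)"

end

theory Submission
  imports Defs
begin
definition cls :: "graph \<Rightarrow> int set \<Rightarrow> graph" where
  "cls H e = (edge_adj H)\<^sup>* `` {e}"

definition avoid :: "graph \<Rightarrow> graph \<Rightarrow> bool" where
  "avoid C U \<longleftrightarrow> verts C \<inter> verts U = {}"

lemma adj_iff: "(f,g) \<in> edge_adj H \<longleftrightarrow> f \<in> H \<and> g \<in> H \<and> f \<inter> g \<noteq> {}"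
  by (auto simp: edge_adj_def)

lemma comps_eq: "components H = cls H ` H"
  by (auto simp: components_def quotient_def cls_def)

lemma sym_adj: "sym (edge_adj H)"
  by (auto simp: sym_def edge_adj_def)

lemma cls_self: "e \<in> cls H e"
  by (auto simp: cls_def)

lemma cls_sym: assumes "f \<in> cls H e" shows "cls H f = cls H e"
proof -
  have s: "sym ((edge_adj H)\<^sup>*)" using sym_adj sym_rtrancl by blast
  have ef: "(e,f) \<in> (edge_adj H)\<^sup>*" using assms by (auto simp: cls_def)
  hence fe: "(f,e) \<in> (edge_adj H)\<^sup>*" using s by (auto simp: sym_def)
  show ?thesis using ef fe unfolding cls_def
    by (auto intro: rtrancl_trans)
qed

lemma cls_in: assumes "e \<in> H" "f \<in> cls H e" shows "f \<in> H"
proof -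
  have "(e,f) \<in> (edge_adj H)\<^sup>*" using assms by (auto simp: cls_def)
  thus ?thesis using assms(1) by (induction rule: rtrancl_induct) (auto simp: edge_adj_def)
qed

lemma cls_mono: assumes "H \<subseteq> H'" shows "cls H e \<subseteq> cls H' e"
proof -
  have "edge_adj H \<subseteq> edge_adj H'" using assms by (auto simp: edge_adj_def)
  hence "(edge_adj H)\<^sup>* \<subseteq> (edge_adj H')\<^sup>*" by (rule rtrancl_mono)
  thus ?thesis by (auto simp: cls_def)
qed

lemma cls_step: "f \<in> cls H e \<Longrightarrow> (f,g) \<in> edge_adj H \<Longrightarrow> g \<in> cls H e"
  by (auto simp: cls_def intro: rtrancl_into_rtrancl)

lemma avoid_sub: "avoid C U \<Longrightarrow> C' \<subseteq> C \<Longrightarrow> avoid C' U"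
  by (auto simp: avoid_def verts_def)

lemma gminus_char: "e \<in> gminus H U \<longleftrightarrow> e \<in> H \<and> avoid (cls H e) U"
proof
  assume "e \<in> gminus H U"
  then obtain x where x: "x \<in> H" "e \<in> cls H x" "avoid (cls H x) U"
    by (auto simp: gminus_def comps_eq avoid_def)
  thus "e \<in> H \<and> avoid (cls H e) U" using cls_sym[OF x(2)] cls_in[OF x(1,2)] by simp
next
  assume "e \<in> H \<and> avoid (cls H e) U"
  thus "e \<in> gminus H U" using cls_self[of e H]
    by (auto simp: gminus_def comps_eq avoid_def)
qed

lemma gminus_sub: "gminus H U \<subseteq> H"
  using gminus_char by blast

lemma cls_gminus: assumes "e \<in> gminus H U" shows "cls (gminus H U) e = cls H e"
proof
  show "cls (gminus H U) e \<subseteq> cls H e" by (rule cls_mono[OF gminus_sub])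
next
  have e: "e \<in> H" "avoid (cls H e) U" using assms gminus_char by auto
  { fix f assume "(e,f) \<in> (edge_adj H)\<^sup>*"
    hence "(e,f) \<in> (edge_adj (gminus H U))\<^sup>*"
    proof (induction rule: rtrancl_induct)
      case base thus ?case by simp
    next
      case (step f g)
      have f: "f \<in> cls H e" using step(1) by (simp add: cls_def)
      have g: "g \<in> cls H e" using step(1,2) by (simp add: cls_def rtrancl_into_rtrancl)
      have "f \<in> gminus H U" using f cls_sym[OF f] cls_in[OF e(1) f] e(2) gminus_char by auto
      moreover have "g \<in> gminus H U" using g cls_sym[OF g] cls_in[OF e(1) g] e(2) gminus_char by auto
      ultimately have "(f,g) \<in> edge_adj (gminus H U)" using step(2) by (auto simp: edge_adj_def)
      with step(3) show ?case by (rule rtrancl_into_rtrancl)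
    qed }
  thus "cls H e \<subseteq> cls (gminus H U) e" by (auto simp: cls_def)
qed

lemma comps_gminus: "components (gminus H U) = {C \<in> components H. avoid C U}"
proof
  show "components (gminus H U) \<subseteq> {C \<in> components H. avoid C U}"
    unfolding comps_eq using cls_gminus gminus_char by fastforce
next
  show "{C \<in> components H. avoid C U} \<subseteq> components (gminus H U)"
  proof
    fix C assume "C \<in> {C \<in> components H. avoid C U}"
    then obtain x where x: "x \<in> H" "C = cls H x" "avoid C U" by (auto simp: comps_eq)
    hence xm: "x \<in> gminus H U" using gminus_char by auto
    show "C \<in> components (gminus H U)" unfolding comps_eq
      using cls_gminus[OF xm] xm x(2) by auto
  qed
qed

lemma ncomp_gminus: "n_comp (gminus H U) = card {C \<in> components H. avoid C U}"
  by (simp add: n_comp_def comps_gminus)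

lemma gminus_empty: assumes "H \<subseteq> U" "{} \<notin> H" shows "gminus H U = {}"
proof -
  { fix e assume "e \<in> gminus H U"
    hence e: "e \<in> H" "avoid (cls H e) U" using gminus_char by auto
    have "e \<subseteq> verts (cls H e)" using cls_self[of e H] by (auto simp: verts_def)
    moreover have "e \<subseteq> verts U" using e(1) assms(1) by (auto simp: verts_def)
    moreover have "e \<noteq> {}" using e(1) assms(2) by auto
    ultimately have False using e(2) by (auto simp: avoid_def) }
  thus ?thesis by auto
qed

lemma ncomp_empty: assumes "H \<subseteq> U" "{} \<notin> H" shows "n_comp (gminus H U) = 0"
  using gminus_empty[OF assms] by (simp add: n_comp_def components_def)

lemma cls_union_eq:
  assumes A: "A \<subseteq> U" and e: "e \<in> H" and av: "avoid (cls H e) U"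
  shows "cls (A \<union> H) e = cls H e"
proof
  show "cls H e \<subseteq> cls (A \<union> H) e" by (rule cls_mono) auto
next
  { fix f assume "(e,f) \<in> (edge_adj (A \<union> H))\<^sup>*"
    hence "(e,f) \<in> (edge_adj H)\<^sup>*"
    proof (induction rule: rtrancl_induct)
      case base thus ?case by simp
    next
      case (step f g)
      have f: "f \<in> cls H e" using step(3) by (simp add: cls_def)
      have fH: "f \<in> H" using cls_in[OF e f] .
      have fg: "g \<in> A \<union> H" "f \<inter> g \<noteq> {}" using step(2) by (auto simp: edge_adj_def)
      have "g \<notin> A"
      proof
        assume "g \<in> A"
        hence "g \<subseteq> verts U" using A by (auto simp: verts_def)
        moreover have "f \<subseteq> verts (cls H e)" using f by (auto simp: verts_def)
        ultimately show False using fg(2) av by (auto simp: avoid_def)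
      qed
      hence "(f,g) \<in> edge_adj H" using fg fH by (auto simp: edge_adj_def)
      with step(3) show ?case by (rule rtrancl_into_rtrancl)
    qed }
  thus "cls (A \<union> H) e \<subseteq> cls H e" by (auto simp: cls_def)
qed

lemma gminus_union:
  assumes A: "A \<subseteq> U" "{} \<notin> A"
  shows "gminus (A \<union> H) U = gminus H U"
proof
  show "gminus (A \<union> H) U \<subseteq> gminus H U"
  proof
    fix e assume "e \<in> gminus (A \<union> H) U"
    hence e: "e \<in> A \<union> H" "avoid (cls (A \<union> H) e) U" using gminus_char by auto
    have "e \<notin> A"
    proof
      assume eA: "e \<in> A"
      hence "e \<subseteq> verts U" "e \<noteq> {}" using A by (auto simp: verts_def)
      moreover have "e \<subseteq> verts (cls (A \<union> H) e)" using cls_self[of e] by (auto simp: verts_def)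
      ultimately show False using e(2) by (auto simp: avoid_def)
    qed
    hence eH: "e \<in> H" using e by auto
    have "avoid (cls H e) U" using avoid_sub[OF e(2) cls_mono[of H "A \<union> H"]] by auto
    thus "e \<in> gminus H U" using eH gminus_char by auto
  qed
next
  show "gminus H U \<subseteq> gminus (A \<union> H) U"
  proof
    fix e assume "e \<in> gminus H U"
    hence e: "e \<in> H" "avoid (cls H e) U" using gminus_char by auto
    thus "e \<in> gminus (A \<union> H) U" using cls_union_eq[OF A(1) e] gminus_char by auto
  qed
qed

lemma finite_comps: "finite H \<Longrightarrow> finite (components H)"
  by (simp add: comps_eq)

lemma restr_le:
  assumes fin: "finite G" and X: "X \<subseteq> G" and P: "P \<subseteq> G" and K: "K = gminus G F"
  shows "n_comp (gminus (X \<inter> K) (P \<inter> K)) \<le> n_comp (gminus X (F \<union> P))"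
proof -
  have sub: "{C \<in> components (X \<inter> K). avoid C (P \<inter> K)} \<subseteq> {C \<in> components X. avoid C (F \<union> P)}"
  proof
    fix C assume "C \<in> {C \<in> components (X \<inter> K). avoid C (P \<inter> K)}"
    then obtain e where e: "e \<in> X" "e \<in> K" "C = cls (X \<inter> K) e" "avoid C (P \<inter> K)"
      by (auto simp: comps_eq)
    have eG: "e \<in> G" "avoid (cls G e) F" using e(2) K gminus_char by auto
    have clsK: "cls G e \<subseteq> K"
    proof
      fix f assume f: "f \<in> cls G e"
      show "f \<in> K" using K gminus_char cls_in[OF eG(1) f] cls_sym[OF f] eG(2) by auto
    qed
    have cXK: "cls X e \<subseteq> K" using cls_mono[OF X, of e] clsK by auto
    have eq: "cls (X \<inter> K) e = cls X e"
    proof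
      show "cls (X \<inter> K) e \<subseteq> cls X e" by (rule cls_mono) auto
    next
      { fix f assume "(e,f) \<in> (edge_adj X)\<^sup>*"
        hence "(e,f) \<in> (edge_adj (X \<inter> K))\<^sup>*"
        proof (induction rule: rtrancl_induct)
          case base thus ?case by simp
        next
          case (step f g)
          have "f \<in> cls X e" "g \<in> cls X e" using step(1,2)
            by (auto simp: cls_def intro: rtrancl_into_rtrancl)
          hence "f \<in> K" "g \<in> K" using cXK by auto
          hence "(f,g) \<in> edge_adj (X \<inter> K)" using step(2) by (auto simp: edge_adj_def)
          with step(3) show ?case by (rule rtrancl_into_rtrancl)
        qed }
      thus "cls X e \<subseteq> cls (X \<inter> K) e" by (auto simp: cls_def)
    qed
    have CX: "C \<in> components X" using e(1,3) eq by (auto simp: comps_eq)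
    have avF: "avoid C F" using avoid_sub[OF eG(2)] e(3) eq cls_mono[OF X, of e] by auto
    have avP: "avoid C P"
    proof (unfold avoid_def, rule ccontr)
      assume "verts C \<inter> verts P \<noteq> {}"
      then obtain c p v where cp: "c \<in> C" "p \<in> P" "v \<in> c" "v \<in> p" by (auto simp: verts_def)
      show False
      proof (cases "p \<in> K")
        case True
        thus False using e(4) cp by (auto simp: avoid_def verts_def)
      next
        case False
        have cG: "c \<in> cls G e" using cp(1) e(3) eq cls_mono[OF X, of e] by auto
        have "c \<in> G" using cls_in[OF eG(1) cG] .
        hence "(c,p) \<in> edge_adj G" using cp P by (auto simp: edge_adj_def)
        hence "p \<in> cls G e" using cls_step[OF cG] by auto
        thus False using clsK False by auto
      qed
    qed
    show "C \<in> {C \<in> components X. avoid C (F \<union> P)}" using CX avF avP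
      by (auto simp: avoid_def verts_def)
  qed
  have "finite X" using fin X finite_subset by auto
  hence "finite {C \<in> components X. avoid C (F \<union> P)}" using finite_comps by auto
  thus ?thesis unfolding ncomp_gminus using card_mono[OF _ sub] by auto
qed

lemma dvec_append: "dvec_c F (xs @ ys) = dvec_c F xs + dvec_c (F \<union> \<Union>(set xs)) ys"
  by (induction xs arbitrary: F) (auto simp: Un_assoc)

lemma dvec_removeAll:
  assumes "x \<subseteq> F" "{} \<notin> x"
  shows "dvec_c F (removeAll x L) = dvec_c F L"
  using assms
proof (induction L arbitrary: F)
  case Nil thus ?case by simp
next
  case (Cons y L)
  show ?case
  proof (cases "y = x")
    case True
    have "F \<union> x = F" using Cons.prems by auto
    thus ?thesis using True Cons ncomp_empty[of x F] by simp
  next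
    case False
    have "x \<subseteq> F \<union> y" using Cons.prems by auto
    hence "dvec_c (F \<union> y) (removeAll x L) = dvec_c (F \<union> y) L" using Cons.IH Cons.prems by blast
    thus ?thesis using False by simp
  qed
qed

lemma dvec_distinct:
  "(\<forall>X\<in>set L. {} \<notin> X) \<Longrightarrow> \<exists>Cs. distinct Cs \<and> set Cs = set L \<and> dvec_c F Cs = dvec_c F L"
proof (induction "length L" arbitrary: L F rule: less_induct)
  case less
  show ?case
  proof (cases L)
    case Nil thus ?thesis by simp
  next
    case (Cons x L')
    let ?L = "removeAll x L'"
    have len: "length ?L < length L" using Cons length_removeAll_less_eq[of x L'] by (simp add: le_imp_less_Suc)
    have ne: "\<forall>X\<in>set ?L. {} \<notin> X" using less.prems Cons by auto
    obtain Cs where Cs: "distinct Cs" "set Cs = set ?L" "dvec_c (F \<union> x) Cs = dvec_c (F \<union> x) ?L"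
      using less.hyps[OF len ne] by blast
    have "dvec_c (F \<union> x) ?L = dvec_c (F \<union> x) L'"
      using dvec_removeAll[of x "F \<union> x" L'] less.prems Cons by auto
    thus ?thesis using Cs Cons by (intro exI[of _ "x # Cs"]) auto
  qed
qed

lemma bc_union: "C \<in> branch_coverings S \<Longrightarrow> \<Union>C = label S"
  by (induction S arbitrary: C) auto

lemma bc_sub: "C \<in> branch_coverings S \<Longrightarrow> X \<in> C \<Longrightarrow> X \<subseteq> label S"
  using bc_union by blast

lemma bc_finite: "finite (branch_coverings S)"
  by (induction S) auto

lemma bc_finite2: "C \<in> branch_coverings S \<Longrightarrow> finite C"
  by (induction S arbitrary: C) auto

lemma bc_nonempty: "branch_coverings S \<noteq> {}"
  by (induction S) auto

lemma Psi_fin: "finite {dvec Cs | Cs C. C \<in> branch_coverings S \<and> distinct Cs \<and> set Cs = C}"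
proof -
  have "{dvec Cs | Cs C. C \<in> branch_coverings S \<and> distinct Cs \<and> set Cs = C}
        \<subseteq> dvec ` {Cs. set Cs \<subseteq> \<Union>(branch_coverings S) \<and> distinct Cs}"
    by auto
  moreover have "finite {Cs. set Cs \<subseteq> \<Union>(branch_coverings S) \<and> distinct Cs}"
    using finite_subset_distinct bc_finite bc_finite2 by (simp add: finite_subset_distinct)
  ultimately show ?thesis using finite_subset by blast
qed

lemma Psi_ge:
  assumes "set L \<in> branch_coverings S" "{} \<notin> label S"
  shows "dvec L \<le> Psi S"
proof -
  have "\<forall>X\<in>set L. {} \<notin> X" using assms bc_sub by blast
  then obtain Cs where Cs: "distinct Cs" "set Cs = set L" "dvec_c {} Cs = dvec_c {} L"
    using dvec_distinct by blast
  have "dvec Cs \<in> {dvec Cs | Cs C. C \<in> branch_coverings S \<and> distinct Cs \<and> set Cs = C}"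
    using Cs assms by auto
  hence "dvec Cs \<le> Psi S" unfolding Psi_def using Psi_fin Max_ge by blast
  thus ?thesis using Cs by (simp add: dvec_def)
qed

lemma Psi_ex: "\<exists>Cs. distinct Cs \<and> set Cs \<in> branch_coverings S \<and> dvec Cs = Psi S"
proof -
  obtain C where C: "C \<in> branch_coverings S" using bc_nonempty by blast
  obtain Cs where "set Cs = C" "distinct Cs" using bc_finite2[OF C] finite_distinct_list by blast
  hence ne: "{dvec Cs | Cs C. C \<in> branch_coverings S \<and> distinct Cs \<and> set Cs = C} \<noteq> {}"
    using C by auto
  have "Psi S \<in> {dvec Cs | Cs C. C \<in> branch_coverings S \<and> distinct Cs \<and> set Cs = C}"
    unfolding Psi_def using Max_in[OF Psi_fin ne] .
  thus ?thesis by auto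
qed

lemma mj_len2: "length xs \<ge> 2 \<Longrightarrow> multi_join xs =
   Node (multi_join (butlast xs)) (multi_join (butlast (butlast xs) @ [last xs]))"
  by (cases xs rule: multi_join.cases) auto

lemma label_mj: "xs \<noteq> [] \<Longrightarrow> label (multi_join xs) = \<Union>(label ` set xs)"
proof (induction xs rule: multi_join.induct)
  case 1 thus ?case by simp
next
  case (2 t) thus ?case by simp
next
  case (3 t u ts)
  define xs where "xs = t # u # ts"
  define l1 where "l1 = butlast xs"
  define l2 where "l2 = butlast (butlast xs) @ [last xs]"
  have ne1: "l1 \<noteq> []" unfolding l1_def xs_def by simp
  have ne2: "l2 \<noteq> []" unfolding l2_def by simp
  have st: "set xs = set l1 \<union> set l2"
  proof -
    have a: "xs = l1 @ [last xs]" unfolding l1_def xs_def by simp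
    have b: "l1 = butlast l1 @ [last l1]" using ne1 by simp
    have c: "l2 = butlast l1 @ [last xs]" unfolding l2_def l1_def by simp
    show ?thesis using a b c by (metis Un_assoc Un_commute Un_absorb set_append)
  qed
  have "label (multi_join xs) = label (multi_join l1) \<union> label (multi_join l2)"
    unfolding xs_def l1_def l2_def by (simp only: multi_join.simps label.simps)
  also have "\<dots> = \<Union>(label ` set l1) \<union> \<Union>(label ` set l2)"
  proof -
    have "label (multi_join l1) = \<Union>(label ` set l1)" using 3(1) ne1 unfolding l1_def xs_def by blast
    moreover have "label (multi_join l2) = \<Union>(label ` set l2)" using 3(2) ne2 unfolding l2_def xs_def by blast
    ultimately show ?thesis by simp
  qed
  also have "\<dots> = \<Union>(label ` set xs)" using st by auto
  finally show ?case unfolding xs_def .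
qed


lemma mj_node:
  assumes "m \<ge> 2"
  shows "multi_join (map T [1..<m+1]) =
    Node (multi_join (map T [1..<m])) (multi_join (map (T(m-1 := T m)) [1..<m]))"
proof -
  have l: "length (map T [1..<m+1]) \<ge> 2" using assms by simp
  have b1: "butlast (map T [1..<m+1]) = map T [1..<m]" using assms by (simp add: map_butlast[symmetric])
  have u: "[1..<m] = [1..<m-1] @ [m-1]"
  proof -
    obtain k where k: "m = Suc k" "k \<ge> 1" using assms by (cases m) auto
    thus ?thesis by simp
  qed
  have b2: "butlast (map T [1..<m]) = map T [1..<m-1]" by (subst u) simp
  have lt: "last (map T [1..<m+1]) = T m" using assms by (simp add: last_map)
  have e: "map (T(m-1 := T m)) [1..<m] = map T [1..<m-1] @ [T m]"
  proof -
    from u have "map (T(m-1 := T m)) [1..<m] = map (T(m-1 := T m)) [1..<m-1] @ [T m]" by simp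
    also have "map (T(m-1 := T m)) [1..<m-1] = map T [1..<m-1]" by (rule map_cong) auto
    finally show ?thesis .
  qed
  have "multi_join (map T [1..<m+1]) = Node (multi_join (butlast (map T [1..<m+1])))
     (multi_join (butlast (butlast (map T [1..<m+1])) @ [last (map T [1..<m+1])]))"
    by (rule mj_len2[OF l])
  also have "\<dots> = Node (multi_join (map T [1..<m])) (multi_join (map (T(m-1 := T m)) [1..<m]))"
    by (simp only: b1 b2 lt e)
  finally show ?thesis .
qed

lemma label_mjT: assumes "m \<ge> 1" shows "label (multi_join (map T [1..<m+1])) = (\<Union>i\<in>{1..m}. label (T i))"
proof -
  have "set (map T [1..<m+1]) = T ` {1..m}" by auto
  moreover have "map T [1..<m+1] \<noteq> []" using assms by simp
  ultimately show ?thesis using label_mj by (simp add: image_image)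
qed

lemma label_restrict: "label (restrict_leaves K S) = label S \<inter> K"
  by (induction S) auto

lemma bc_restrict: "branch_coverings (restrict_leaves K S) = (\<lambda>C. (\<lambda>X. X \<inter> K) ` C) ` branch_coverings S"
proof (induction S)
  case (Leaf E) thus ?case by simp
next
  case (Node a b)
  let ?f = "\<lambda>C. (\<lambda>X. X \<inter> K) ` C"
  have e: "\<And>x A. {insert x C | C. C \<in> A} = (insert x) ` A" by blast
  have e2: "\<And>x A. ?f ` (insert x ` A) = insert (x \<inter> K) ` (?f ` A)" by (simp add: image_image)
  show ?case by (simp only: branch_coverings.simps restrict_leaves.simps Node label_restrict e e2 image_Un)
qed

definition spp :: "nat \<Rightarrow> (nat \<Rightarrow> nat) \<Rightarrow> bool" where
  "spp m \<tau> \<longleftrightarrow> (\<forall>i\<in>{1..m}. \<tau> i \<in> {1..m}) \<and> inj_on \<tau> {1..m} \<and> (\<forall>i\<in>{1..m}. i - 1 \<le> \<tau> i)"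

definition Qc :: "(nat \<Rightarrow> nat) \<Rightarrow> nat \<Rightarrow> bool" where
  "Qc \<tau> h \<longleftrightarrow> (\<forall>i. 1 \<le> i \<and> i < h \<longrightarrow> \<tau> i = i) \<or>
     (2 \<le> h \<and> (\<forall>i. 1 \<le> i \<and> i < h - 1 \<longrightarrow> \<tau> i = i) \<and> \<tau> h = h - 1)"

lemma spp_img: "spp m \<tau> \<Longrightarrow> \<tau> ` {1..m} = {1..m}"
  unfolding spp_def by (intro endo_inj_surj) auto

lemma spp_last: "spp m \<tau> \<Longrightarrow> m \<ge> 1 \<Longrightarrow> \<tau> m = m \<or> \<tau> m = m - 1"
  unfolding spp_def by force

lemma spp_ne: assumes "spp m \<tau>" "i \<in> {1..m}" "k \<in> {1..m}" "i \<noteq> k" shows "\<tau> i \<noteq> \<tau> k"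
  using assms unfolding spp_def inj_on_def by blast

lemma spp_img_lt: assumes "spp m \<tau>" "m \<ge> 1" shows "\<tau> ` {1..<m} = {1..m} - {\<tau> m}"
proof -
  have "{1..m} = insert m {1..<m}" using assms(2) by auto
  hence "\<tau> ` {1..m} = insert (\<tau> m) (\<tau> ` {1..<m})" by auto
  moreover have "\<tau> m \<notin> \<tau> ` {1..<m}"
  proof
    assume "\<tau> m \<in> \<tau> ` {1..<m}"
    then obtain i where "i \<in> {1..<m}" "\<tau> i = \<tau> m" by auto
    thus False using spp_ne[OF assms(1), of i m] assms(2) by auto
  qed
  ultimately have "insert (\<tau> m) (\<tau> ` {1..<m}) - {\<tau> m} = {1..m} - {\<tau> m}"
    using spp_img[OF assms(1)] by simp
  thus ?thesis using Diff_insert_absorb[OF \<open>\<tau> m \<notin> \<tau> ` {1..<m}\<close>] by simp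
qed

lemma spp_peel1: assumes "spp m \<tau>" "\<tau> m = m" shows "spp (m - 1) \<tau>"
proof -
  have a: "\<tau> i \<noteq> m" if "i \<in> {1..m-1}" for i
  proof -
    have "i \<in> {1..m}" "m \<in> {1..m}" "i \<noteq> m" using that by auto
    thus ?thesis using spp_ne[OF assms(1), of i m] assms(2) by simp
  qed
  have b: "\<tau> i \<in> {1..m}" "i - 1 \<le> \<tau> i" if "i \<in> {1..m-1}" for i
    using assms(1) that unfolding spp_def by auto
  have "{1..m-1} \<subseteq> {1..m}" by auto
  hence c: "inj_on \<tau> {1..m-1}" using assms(1) inj_on_subset unfolding spp_def by blast
  show ?thesis unfolding spp_def using a b c by fastforce
qed

lemma spp_peel2: assumes "spp m \<tau>" "\<tau> m = m - 1" "m \<ge> 2"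
  shows "spp (m - 1) (\<lambda>i. if \<tau> i = m then m - 1 else \<tau> i)"
proof -
  let ?t = "\<lambda>i. if \<tau> i = m then m - 1 else \<tau> i"
  have a: "\<tau> i \<noteq> m - 1" if "i \<in> {1..m-1}" for i
  proof -
    have "i \<in> {1..m}" "m \<in> {1..m}" "i \<noteq> m" using that assms(3) by auto
    thus ?thesis using spp_ne[OF assms(1), of i m] assms(2) by simp
  qed
  have b: "\<tau> i \<in> {1..m}" "i - 1 \<le> \<tau> i" if "i \<in> {1..m-1}" for i
    using assms(1) that unfolding spp_def by auto
  have r: "?t i \<in> {1..m-1}" "i - 1 \<le> ?t i" if "i \<in> {1..m-1}" for i
    using a[OF that] b[OF that] that assms(3) by auto
  have "inj_on ?t {1..m-1}"
  proof (rule inj_onI)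
    fix x y assume xy: "x \<in> {1..m-1}" "y \<in> {1..m-1}" "?t x = ?t y"
    show "x = y"
    proof (rule ccontr)
      assume "x \<noteq> y"
      moreover have "x \<in> {1..m}" "y \<in> {1..m}" using xy by auto
      ultimately have "\<tau> x \<noteq> \<tau> y" using spp_ne[OF assms(1), of x y] by blast
      thus False using xy a[OF xy(1)] a[OF xy(2)] by (auto split: if_splits)
    qed
  qed
  thus ?thesis unfolding spp_def using r by blast
qed

lemma bc_nodeL: "C \<in> branch_coverings a \<Longrightarrow> insert (label b) C \<in> branch_coverings (Node a b)"
  by auto
lemma bc_nodeR: "C \<in> branch_coverings b \<Longrightarrow> insert (label a) C \<in> branch_coverings (Node a b)"
  by auto

lemma pathR:
  "1 \<le> j \<Longrightarrow> j \<le> m \<Longrightarrow> set B \<in> branch_coverings (T j) \<Longrightarrow>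
   \<exists>S. set (S @ B) \<in> branch_coverings (multi_join (map T [1..<m+1]))"
proof (induction m arbitrary: T j)
  case 0 thus ?case by simp
next
  case (Suc n)
  show ?case
  proof (cases "n = 0")
    case True
    hence "j = 1" using Suc.prems by simp
    hence "set ([] @ B) \<in> branch_coverings (multi_join (map T [1..<Suc n+1]))"
      using Suc.prems True by simp
    thus ?thesis by blast
  next
    case False
    hence m2: "Suc n \<ge> 2" by simp
    note nd = mj_node[OF m2, of T]
    show ?thesis
    proof (cases "j \<le> n")
      case True
      obtain S where S: "set (S @ B) \<in> branch_coverings (multi_join (map T [1..<n+1]))"
        using Suc.IH[of j T] Suc.prems True by blast
      let ?R = "label (multi_join (map (T(Suc n - 1 := T (Suc n))) [1..<Suc n]))"
      have "insert ?R (set (S @ B)) \<in> branch_coverings (multi_join (map T [1..<Suc n+1]))"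
        unfolding nd using bc_nodeL[OF S[simplified]] by simp
      hence "set ((?R # S) @ B) \<in> branch_coverings (multi_join (map T [1..<Suc n+1]))" by simp
      thus ?thesis by blast
    next
      case False
      hence j: "j = Suc n" using Suc.prems by simp
      define T' where "T' = T(n := T (Suc n))"
      have "set B \<in> branch_coverings (T' n)" using Suc.prems j by (simp add: T'_def)
      moreover have "1 \<le> n" using \<open>n \<noteq> 0\<close> by simp
      ultimately obtain S where S: "set (S @ B) \<in> branch_coverings (multi_join (map T' [1..<n+1]))"
        using Suc.IH[of n T'] by blast
      let ?L = "label (multi_join (map T [1..<Suc n]))"
      have "insert ?L (set (S @ B)) \<in> branch_coverings (multi_join (map T [1..<Suc n+1]))"
        unfolding nd using bc_nodeR[OF S[simplified]] by (simp add: T'_def)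
      hence "set ((?L # S) @ B) \<in> branch_coverings (multi_join (map T [1..<Suc n+1]))" by simp
      thus ?thesis by blast
    qed
  qed
qed

lemma dvec_snoc: "dvec_c F (xs @ [x]) = dvec_c F xs + n_comp (gminus x (F \<union> \<Union>(set xs)))"
  by (simp add: dvec_append)

lemma upt_snoc1: "1 \<le> n \<Longrightarrow> [1..<Suc n] = [1..<n] @ [n]"
  by simp

lemma UN_set_map: "\<Union>(set (map f xs)) = (\<Union>i\<in>set xs. f i)"
  by simp

lemma baseA:
  "m \<ge> 1 \<Longrightarrow> (\<forall>i\<in>{1..m}. {} \<notin> label (T i)) \<Longrightarrow> set B \<in> branch_coverings (T m) \<Longrightarrow>
   \<exists>S. set (S @ B) \<in> branch_coverings (multi_join (map T [1..<m+1]))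
     \<and> \<Union>(set S) = (\<Union>i\<in>{1..<m}. label (T i))
     \<and> dvec (map (\<lambda>i. label (T i)) [1..<m]) \<le> dvec S"
proof (induction m arbitrary: T)
  case 0 thus ?case by simp
next
  case (Suc n)
  show ?case
  proof (cases "n = 0")
    case True
    hence "set ([] @ B) \<in> branch_coverings (multi_join (map T [1..<Suc n+1]))"
      using Suc.prems by simp
    thus ?thesis using True by (intro exI[of _ "[]"]) simp
  next
    case False
    hence n1: "1 \<le> n" by simp
    have m2: "Suc n \<ge> 2" using n1 by simp
    note nd = mj_node[OF m2, of T]
    define T' where "T' = T(n := T (Suc n))"
    have ne': "\<forall>i\<in>{1..n}. {} \<notin> label (T' i)" using Suc.prems by (simp add: T'_def)
    have B': "set B \<in> branch_coverings (T' n)" using Suc.prems by (simp add: T'_def)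
    obtain S' where S': "set (S' @ B) \<in> branch_coverings (multi_join (map T' [1..<n+1]))"
      "\<Union>(set S') = (\<Union>i\<in>{1..<n}. label (T' i))"
      "dvec (map (\<lambda>i. label (T' i)) [1..<n]) \<le> dvec S'"
      using Suc.IH[OF n1 ne' B'] by blast
    define A where "A = (\<Union>i\<in>{1..<n}. label (T i))"
    have US': "\<Union>(set S') = A" using S'(2) by (simp add: A_def T'_def)
    have mapeq: "map (\<lambda>i. label (T' i)) [1..<n] = map (\<lambda>i. label (T i)) [1..<n]"
      by (rule map_cong) (auto simp: T'_def)
    define L where "L = label (multi_join (map T [1..<Suc n]))"
    have L: "L = A \<union> label (T n)"
    proof -
      have "L = (\<Union>i\<in>{1..n}. label (T i))" unfolding L_def using label_mjT[OF n1, of T] by simp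
      also have "{1..n} = insert n {1..<n}" using n1 by auto
      finally show ?thesis by (auto simp: A_def)
    qed
    have neA: "{} \<notin> A" using Suc.prems by (auto simp: A_def)
    let ?S = "S' @ [L]"
    have "insert L (set (S' @ B)) \<in> branch_coverings (multi_join (map T [1..<Suc n+1]))"
      unfolding nd L_def using bc_nodeR[OF S'(1)] by (simp add: T'_def)
    hence c1: "set (?S @ B) \<in> branch_coverings (multi_join (map T [1..<Suc n+1]))"
      by (simp add: insert_commute)
    have c2: "\<Union>(set ?S) = (\<Union>i\<in>{1..<Suc n}. label (T i))"
    proof -
      have "\<Union>(set ?S) = A \<union> label (T n)" using US' L by auto
      also have "{1..<Suc n} = insert n {1..<n}" using n1 by auto
      ultimately show ?thesis by (auto simp: A_def)
    qed
    have "dvec ?S = dvec S' + n_comp (gminus L A)"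
      unfolding dvec_def using dvec_snoc[of "{}" S' L] US' by simp
    also have "gminus L A = gminus (label (T n)) A" unfolding L using gminus_union[OF _ neA] by simp
    finally have d1: "dvec ?S = dvec S' + n_comp (gminus (label (T n)) A)" .
    have "dvec (map (\<lambda>i. label (T i)) [1..<Suc n]) =
          dvec (map (\<lambda>i. label (T i)) [1..<n]) + n_comp (gminus (label (T n)) A)"
      unfolding dvec_def upt_snoc1[OF n1] by (simp add: dvec_snoc A_def)
    moreover have "dvec (map (\<lambda>i. label (T i)) [1..<n]) \<le> dvec S'"
      using S'(3) by (simp only: mapeq)
    ultimately have c3: "dvec (map (\<lambda>i. label (T i)) [1..<Suc n]) \<le> dvec ?S"
      using d1 by linarith
    show ?thesis using c1 c2 c3 by blast
  qed
qed

lemma baseB: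
  assumes m2: "m \<ge> 2" and ne: "\<forall>i\<in>{1..m}. {} \<notin> label (T i)"
    and B: "set B \<in> branch_coverings (T (m - 1))"
  shows "\<exists>S. set (S @ B) \<in> branch_coverings (multi_join (map T [1..<m+1]))
     \<and> \<Union>(set S) = (\<Union>i\<in>{1..<m-1}. label (T i)) \<union> label (T m)
     \<and> dvec (map (\<lambda>i. label (T i)) [1..<m-1] @ [label (T m)]) \<le> dvec S"
proof -
  define n where "n = m - 1"
  have n1: "1 \<le> n" and mn: "m = Suc n" using m2 by (auto simp: n_def)
  have ne': "\<forall>i\<in>{1..n}. {} \<notin> label (T i)" using ne by (auto simp: n_def)
  obtain S' where S': "set (S' @ B) \<in> branch_coverings (multi_join (map T [1..<n+1]))"
      "\<Union>(set S') = (\<Union>i\<in>{1..<n}. label (T i))"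
      "dvec (map (\<lambda>i. label (T i)) [1..<n]) \<le> dvec S'"
    using baseA[OF n1 ne', of B] B by (auto simp: n_def)
  define A where "A = (\<Union>i\<in>{1..<n}. label (T i))"
  note nd = mj_node[OF m2, of T]
  define R where "R = label (multi_join (map (T(m - 1 := T m)) [1..<m]))"
  have R: "R = A \<union> label (T m)"
  proof -
    have "R = (\<Union>i\<in>{1..n}. label ((T(n := T m)) i))" unfolding R_def n_def[symmetric]
      using label_mjT[OF n1, of "T(n := T m)"] mn by simp
    also have "{1..n} = insert n {1..<n}" using n1 by auto
    finally show ?thesis by (auto simp: A_def)
  qed
  have neA: "{} \<notin> A" using ne by (auto simp: A_def n_def)
  let ?S = "S' @ [R]"
  have "insert R (set (S' @ B)) \<in> branch_coverings (multi_join (map T [1..<m+1]))"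
    unfolding nd R_def using bc_nodeL[OF S'(1)] by (simp add: mn)
  hence c1: "set (?S @ B) \<in> branch_coverings (multi_join (map T [1..<m+1]))"
    by (simp add: insert_commute)
  have c2: "\<Union>(set ?S) = (\<Union>i\<in>{1..<m-1}. label (T i)) \<union> label (T m)"
    using S'(2) R by (auto simp: A_def n_def)
  have "dvec ?S = dvec S' + n_comp (gminus R A)"
    unfolding dvec_def using dvec_snoc[of "{}" S' R] S'(2) by (simp add: A_def)
  also have "gminus R A = gminus (label (T m)) A" unfolding R using gminus_union[OF _ neA] by simp
  finally have d1: "dvec ?S = dvec S' + n_comp (gminus (label (T m)) A)" .
  have e: "dvec (map (\<lambda>i. label (T i)) [1..<m-1] @ [label (T m)]) =
        dvec (map (\<lambda>i. label (T i)) [1..<n]) + n_comp (gminus (label (T m)) A)"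
    unfolding dvec_def n_def[symmetric] by (simp add: dvec_snoc A_def)
  have c3: "dvec (map (\<lambda>i. label (T i)) [1..<m-1] @ [label (T m)]) \<le> dvec ?S"
    using e d1 S'(3) by linarith
  show ?thesis using c1 c2 c3 by blast
qed

lemma UN_tau: "\<tau> ` A = B \<Longrightarrow> (\<Union>i\<in>A. g (\<tau> i)) = (\<Union>j\<in>B. g j)"
  by auto

lemma UN_split: "h \<le> n \<Longrightarrow> (\<Union>i\<in>{1..h}. f i) \<union> (\<Union>i\<in>set [h+1..<n+1]. f i) = (\<Union>i\<in>{1..n}. (f i :: 'a set))"
proof -
  assume "h \<le> n"
  hence "{1..h} \<union> set [h+1..<n+1] = {1..n}" by auto
  thus ?thesis by (metis UN_Un)
qed

lemma bc_cover_union: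
  assumes "set (S @ B @ P) \<in> branch_coverings (multi_join (map T [1..<m+1]))" "m \<ge> 1"
  shows "\<Union>(set S) \<union> \<Union>(set B) \<union> \<Union>(set P) = (\<Union>i\<in>{1..m}. label (T i))"
  using bc_union[OF assms(1)] label_mjT[OF assms(2), of T] by auto

lemma W:
  "spp m \<tau> \<Longrightarrow> 1 \<le> h \<Longrightarrow> h \<le> m \<Longrightarrow> (\<forall>i\<in>{1..m}. {} \<notin> label (T i)) \<Longrightarrow>
   set B \<in> branch_coverings (T (\<tau> h)) \<Longrightarrow>
   \<exists>Spre Spost. set (Spre @ B @ Spost) \<in> branch_coverings (multi_join (map T [1..<m+1]))
     \<and> \<Union>(set Spre) \<union> label (T (\<tau> h)) = (\<Union>i\<in>{1..h}. label (T (\<tau> i)))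
     \<and> dvec_c (\<Union>i\<in>{1..h}. label (T (\<tau> i))) (map (\<lambda>i. label (T (\<tau> i))) [h+1..<m+1])
         \<le> dvec_c (\<Union>i\<in>{1..h}. label (T (\<tau> i))) Spost
     \<and> (Qc \<tau> h \<longrightarrow> \<Union>(set Spre) = (\<Union>i\<in>{1..<h}. label (T (\<tau> i)))
          \<and> dvec (map (\<lambda>i. label (T (\<tau> i))) [1..<h]) \<le> dvec Spre)"
proof (induction m arbitrary: T \<tau> h B)
  case 0 thus ?case by simp
next
  case (Suc n)
  define m where "m = Suc n"
  note sp = Suc.prems(1)
  note ne = Suc.prems(4)
  note Bc = Suc.prems(5)
  have m1: "m \<ge> 1" by (simp add: m_def)
  show ?case
  proof (cases "h = Suc n")
    case hm: True
    have "\<exists>S. set (S @ B) \<in> branch_coverings (multi_join (map T [1..<m+1]))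
       \<and> (Qc \<tau> h \<longrightarrow> \<Union>(set S) = (\<Union>i\<in>{1..<h}. label (T (\<tau> i)))
          \<and> dvec (map (\<lambda>i. label (T (\<tau> i))) [1..<h]) \<le> dvec S)"
    proof (cases "Qc \<tau> h")
      case False
      have j: "1 \<le> \<tau> h" "\<tau> h \<le> m" using sp Suc.prems(2,3) unfolding spp_def m_def by auto
      obtain S where "set (S @ B) \<in> branch_coverings (multi_join (map T [1..<m+1]))"
        using pathR[of "\<tau> h" m B T, OF j Bc] by blast
      thus ?thesis using False by blast
    next
      case Q: True
      show ?thesis
      proof (cases "\<forall>i. 1 \<le> i \<and> i < h \<longrightarrow> \<tau> i = i")
        case c1: True
        have tm: "\<tau> m = m"
        proof (rule ccontr)
          assume a: "\<tau> m \<noteq> m"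
          have "\<tau> m \<in> {1..m}" using sp unfolding spp_def m_def by auto
          hence b: "1 \<le> \<tau> m" "\<tau> m < m" using a by auto
          hence "\<tau> (\<tau> m) = \<tau> m" using c1 hm m_def by auto
          thus False using spp_ne[OF sp, of "\<tau> m" m] b m_def by auto
        qed
        have ne': "\<forall>i\<in>{1..m}. {} \<notin> label (T i)" using ne m_def by simp
        have B': "set B \<in> branch_coverings (T m)" using Bc tm hm m_def by simp
        obtain S where S: "set (S @ B) \<in> branch_coverings (multi_join (map T [1..<m+1]))"
          "\<Union>(set S) = (\<Union>i\<in>{1..<m}. label (T i))"
          "dvec (map (\<lambda>i. label (T i)) [1..<m]) \<le> dvec S"
          using baseA[OF m1 ne' B'] by blast
        have e1: "(\<Union>i\<in>{1..<h}. label (T (\<tau> i))) = (\<Union>i\<in>{1..<m}. label (T i))"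
          using c1 hm m_def by (intro SUP_cong) auto
        have e2: "map (\<lambda>i. label (T (\<tau> i))) [1..<h] = map (\<lambda>i. label (T i)) [1..<m]"
          using c1 hm m_def by (intro map_cong) auto
        show ?thesis using S e1 e2 by metis
      next
        case c2: False
        hence q: "2 \<le> h" "\<forall>i. 1 \<le> i \<and> i < h - 1 \<longrightarrow> \<tau> i = i" "\<tau> h = h - 1"
          using Q unfolding Qc_def by blast+
        have m2: "m \<ge> 2" using q hm m_def by simp
        have tm1: "\<tau> (m - 1) = m"
        proof -
          have r: "\<tau> (m - 1) \<in> {1..m}" using sp m2 unfolding spp_def m_def by auto
          have "\<tau> (m - 1) \<noteq> m - 1" using spp_ne[OF sp, of "m - 1" m] q hm m_def m2 by auto
          moreover have "\<not> \<tau> (m - 1) < m - 1"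
          proof
            assume a: "\<tau> (m - 1) < m - 1"
            hence "\<tau> (\<tau> (m - 1)) = \<tau> (m - 1)" using q r hm m_def by auto
            thus False using spp_ne[OF sp, of "\<tau> (m - 1)" "m - 1"] a r m2 m_def by auto
          qed
          ultimately show ?thesis using r by auto
        qed
        have ne': "\<forall>i\<in>{1..m}. {} \<notin> label (T i)" using ne m_def by simp
        have B': "set B \<in> branch_coverings (T (m - 1))" using Bc q hm m_def by simp
        obtain S where S: "set (S @ B) \<in> branch_coverings (multi_join (map T [1..<m+1]))"
          "\<Union>(set S) = (\<Union>i\<in>{1..<m-1}. label (T i)) \<union> label (T m)"
          "dvec (map (\<lambda>i. label (T i)) [1..<m-1] @ [label (T m)]) \<le> dvec S"
          using baseB[OF m2 ne' B'] by blast
        have u: "[1..<m] = [1..<m-1] @ [m-1]" using m2 upt_snoc1[of "m - 1"] by simp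
        have e1: "(\<Union>i\<in>{1..<h}. label (T (\<tau> i))) = (\<Union>i\<in>{1..<m-1}. label (T i)) \<union> label (T m)"
        proof -
          have "{1..<h} = insert (m - 1) {1..<m-1}" using hm m2 m_def by auto
          hence "(\<Union>i\<in>{1..<h}. label (T (\<tau> i))) = label (T (\<tau> (m - 1))) \<union> (\<Union>i\<in>{1..<m-1}. label (T (\<tau> i)))"
            by simp
          also have "(\<Union>i\<in>{1..<m-1}. label (T (\<tau> i))) = (\<Union>i\<in>{1..<m-1}. label (T i))"
            using q hm m_def by (intro SUP_cong) auto
          finally show ?thesis using tm1 by auto
        qed
        have e2: "map (\<lambda>i. label (T (\<tau> i))) [1..<h] = map (\<lambda>i. label (T i)) [1..<m-1] @ [label (T m)]"
        proof -
          have "map (\<lambda>i. label (T (\<tau> i))) [1..<h] = map (\<lambda>i. label (T (\<tau> i))) [1..<m-1] @ [label (T m)]"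
            using u tm1 hm m_def by simp
          also have "map (\<lambda>i. label (T (\<tau> i))) [1..<m-1] = map (\<lambda>i. label (T i)) [1..<m-1]"
            using q hm m_def by (intro map_cong) auto
          finally show ?thesis .
        qed
        show ?thesis using S e1 e2 by metis
      qed
    qed
    then obtain S where S: "set (S @ B) \<in> branch_coverings (multi_join (map T [1..<m+1]))"
       "Qc \<tau> h \<longrightarrow> \<Union>(set S) = (\<Union>i\<in>{1..<h}. label (T (\<tau> i)))
          \<and> dvec (map (\<lambda>i. label (T (\<tau> i))) [1..<h]) \<le> dvec S" by blast
    have S1: "set (S @ B @ []) \<in> branch_coverings (multi_join (map T [Suc 0..<Suc n+1]))"
      using S(1) m_def by simp
    have "\<Union>(set S) \<union> \<Union>(set B) = (\<Union>i\<in>{1..m}. label (T i))"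
      using bc_cover_union[of S B "[]" T m] S(1) m1 by simp
    also have "\<dots> = (\<Union>i\<in>{1..h}. label (T (\<tau> i)))"
      using UN_tau[OF spp_img[OF sp], of "\<lambda>j. label (T j)"] hm m_def by simp
    finally have c2: "\<Union>(set S) \<union> label (T (\<tau> h)) = (\<Union>i\<in>{1..h}. label (T (\<tau> i)))"
      using bc_union[OF Bc] by simp
    have c3: "map (\<lambda>i. label (T (\<tau> i))) [h+1..<Suc n+1] = []" using hm by simp
    show ?thesis using S1 c2 c3 S(2) by (intro exI[of _ S] exI[of _ "[]"]) simp
  next
    case hl: False
    have hn: "h \<le> n" using hl Suc.prems(3) by simp
    have n1: "1 \<le> n" using hn Suc.prems(2) by simp
    have m2: "Suc n \<ge> 2" using n1 by simp
    note nd = mj_node[OF m2, of T]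
    define f where "f = (\<lambda>i. label (T (\<tau> i)))"
    define Fh where "Fh = (\<Union>i\<in>{1..h}. f i)"
    define A where "A = (\<Union>i\<in>{1..<n}. label (T i))"
    have neA: "{} \<notin> A" using ne by (auto simp: A_def)
    have upt_h: "[h+1..<Suc n+1] = [h+1..<n+1] @ [Suc n]" using hn by simp
    have UA: "(\<Union>i\<in>{1..n}. label (T i)) = A \<union> label (T n)"
    proof -
      have "{1..n} = insert n {1..<n}" using n1 by auto
      thus ?thesis by (auto simp: A_def)
    qed
    have lastc: "\<tau> (Suc n) = Suc n \<or> \<tau> (Suc n) = n" using spp_last[OF sp] by simp
    show ?thesis
    proof (cases "\<tau> (Suc n) = Suc n")
      case tm: True
      have sp': "spp n \<tau>" using spp_peel1[OF sp tm] by simp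
      have ne': "\<forall>i\<in>{1..n}. {} \<notin> label (T i)" using ne by simp
      obtain Spre Spost where IH: "set (Spre @ B @ Spost) \<in> branch_coverings (multi_join (map T [1..<n+1]))"
        "\<Union>(set Spre) \<union> label (T (\<tau> h)) = Fh"
        "dvec_c Fh (map f [h+1..<n+1]) \<le> dvec_c Fh Spost"
        "Qc \<tau> h \<longrightarrow> \<Union>(set Spre) = (\<Union>i\<in>{1..<h}. f i) \<and> dvec (map f [1..<h]) \<le> dvec Spre"
        using Suc.IH[OF sp' Suc.prems(2) hn ne' Bc] unfolding f_def Fh_def by blast
      define R where "R = label (multi_join (map (T(Suc n - 1 := T (Suc n))) [1..<Suc n]))"
      have R: "R = A \<union> label (T (Suc n))"
      proof -
        have "R = (\<Union>i\<in>{1..n}. label ((T(n := T (Suc n))) i))" unfolding R_def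
          using label_mjT[OF n1, of "T(n := T (Suc n))"] by simp
        also have "{1..n} = insert n {1..<n}" using n1 by auto
        finally show ?thesis by (auto simp: A_def)
      qed
      have c1: "set (Spre @ B @ Spost @ [R]) \<in> branch_coverings (multi_join (map T [1..<Suc n+1]))"
      proof -
        have "insert R (set (Spre @ B @ Spost)) \<in> branch_coverings (multi_join (map T [1..<Suc n+1]))"
          unfolding nd R_def using bc_nodeL[OF IH(1)] by simp
        thus ?thesis by (simp add: insert_commute)
      qed
      have U: "Fh \<union> \<Union>(set Spost) = A \<union> label (T n)"
      proof -
        have "\<Union>(set Spre) \<union> \<Union>(set B) \<union> \<Union>(set Spost) = (\<Union>i\<in>{1..n}. label (T i))"
          using bc_cover_union[OF IH(1) n1] .
        thus ?thesis using IH(2) bc_union[OF Bc] UA by auto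
      qed
      have d1: "dvec_c Fh (Spost @ [R]) = dvec_c Fh Spost + n_comp (gminus (label (T (Suc n))) (A \<union> label (T n)))"
        using dvec_snoc[of Fh Spost R] U R gminus_union[of A "A \<union> label (T n)" "label (T (Suc n))"] neA
        by auto
      have U2: "Fh \<union> \<Union>(set (map f [h+1..<n+1])) = A \<union> label (T n)"
      proof -
        have "Fh \<union> \<Union>(set (map f [h+1..<n+1])) = (\<Union>i\<in>{1..n}. f i)"
          unfolding Fh_def UN_set_map using UN_split[OF hn] by simp
        also have "\<dots> = (\<Union>i\<in>{1..n}. label (T i))" unfolding f_def
          using UN_tau[OF spp_img[OF sp'], of "\<lambda>j. label (T j)"] by simp
        finally show ?thesis using UA by simp
      qed
      have d2: "dvec_c Fh (map f [h+1..<Suc n+1]) = dvec_c Fh (map f [h+1..<n+1])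
          + n_comp (gminus (label (T (Suc n))) (A \<union> label (T n)))"
        unfolding upt_h using dvec_snoc[of Fh "map f [h+1..<n+1]" "f (Suc n)"] U2 tm
        by (simp add: f_def)
      have c3: "dvec_c Fh (map f [h+1..<Suc n+1]) \<le> dvec_c Fh (Spost @ [R])"
        using d1 d2 IH(3) by linarith
      show ?thesis using c1 IH(2) c3 IH(4) unfolding f_def Fh_def
        by (intro exI[of _ Spre] exI[of _ "Spost @ [R]"]) simp
    next
      case tm: False
      hence tm: "\<tau> (Suc n) = n" using lastc by simp
      define \<tau>' where "\<tau>' = (\<lambda>i. if \<tau> i = Suc n then n else \<tau> i)"
      define T' where "T' = T(n := T (Suc n))"
      have X: "spp (Suc n - 1) (\<lambda>i. if \<tau> i = Suc n then Suc n - 1 else \<tau> i)"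
        by (rule spp_peel2[OF sp _ m2]) (simp add: tm)
      have sp': "spp n \<tau>'" using X unfolding \<tau>'_def diff_Suc_1 .
      have TT: "T' (\<tau>' i) = T (\<tau> i)" if "i \<in> {1..n}" for i
      proof -
        have "\<tau> i \<noteq> n" using spp_ne[OF sp, of i "Suc n"] tm that by auto
        thus ?thesis unfolding T'_def \<tau>'_def by auto
      qed
      have ff: "label (T' (\<tau>' i)) = f i" if "i \<in> {1..n}" for i using TT[OF that] by (simp add: f_def)
      have ne': "\<forall>i\<in>{1..n}. {} \<notin> label (T' i)" using ne by (simp add: T'_def)
      have hh: "h \<in> {1..n}" using hn Suc.prems(2) by simp
      have Bc': "set B \<in> branch_coverings (T' (\<tau>' h))" using Bc TT[OF hh] by simp
      have Fh': "(\<Union>i\<in>{1..h}. label (T' (\<tau>' i))) = Fh" unfolding Fh_def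
        using ff hn by (intro SUP_cong) auto
      have map1: "map (\<lambda>i. label (T' (\<tau>' i))) [h+1..<n+1] = map f [h+1..<n+1]"
        using ff by (intro map_cong) auto
      have map2: "map (\<lambda>i. label (T' (\<tau>' i))) [1..<h] = map f [1..<h]"
        using ff hn by (intro map_cong) auto
      have UNh: "(\<Union>i\<in>{1..<h}. label (T' (\<tau>' i))) = (\<Union>i\<in>{1..<h}. f i)"
        using ff hn by (intro SUP_cong) auto
      have Qc': "Qc \<tau> h \<Longrightarrow> Qc \<tau>' h"
      proof -
        assume Q: "Qc \<tau> h"
        have a: "\<tau>' i = i" if "1 \<le> i" "i < h" "\<tau> i = i" for i
          using that hn by (simp add: \<tau>'_def)
        show "Qc \<tau>' h"
        proof (cases "\<forall>i. 1 \<le> i \<and> i < h \<longrightarrow> \<tau> i = i")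
          case True thus ?thesis using a unfolding Qc_def by auto
        next
          case False
          hence q: "2 \<le> h" "\<forall>i. 1 \<le> i \<and> i < h - 1 \<longrightarrow> \<tau> i = i" "\<tau> h = h - 1"
            using Q unfolding Qc_def by blast+
          have "\<tau>' h = h - 1" using q hn by (simp add: \<tau>'_def)
          moreover have "\<forall>i. 1 \<le> i \<and> i < h - 1 \<longrightarrow> \<tau>' i = i" using q a by auto
          ultimately show ?thesis using q unfolding Qc_def by blast
        qed
      qed
      obtain Spre Spost where IH: "set (Spre @ B @ Spost) \<in> branch_coverings (multi_join (map T' [1..<n+1]))"
        "\<Union>(set Spre) \<union> label (T (\<tau> h)) = Fh"
        "dvec_c Fh (map f [h+1..<n+1]) \<le> dvec_c Fh Spost"
        "Qc \<tau>' h \<longrightarrow> \<Union>(set Spre) = (\<Union>i\<in>{1..<h}. f i) \<and> dvec (map f [1..<h]) \<le> dvec Spre"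
        using Suc.IH[OF sp' Suc.prems(2) hn ne' Bc'] unfolding Fh' map1 map2 UNh TT[OF hh] by blast
      define L where "L = label (multi_join (map T [1..<Suc n]))"
      have L: "L = A \<union> label (T n)" unfolding L_def using label_mjT[OF n1, of T] UA by simp
      have c1: "set (Spre @ B @ Spost @ [L]) \<in> branch_coverings (multi_join (map T [1..<Suc n+1]))"
      proof -
        have "insert L (set (Spre @ B @ Spost)) \<in> branch_coverings (multi_join (map T [1..<Suc n+1]))"
          unfolding nd L_def using bc_nodeR[OF IH(1)] by (simp add: T'_def)
        thus ?thesis by (simp add: insert_commute)
      qed
      have UT': "(\<Union>i\<in>{1..n}. label (T' i)) = A \<union> label (T (Suc n))"
      proof -
        have "{1..n} = insert n {1..<n}" using n1 by auto
        thus ?thesis by (auto simp: A_def T'_def)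
      qed
      have U: "Fh \<union> \<Union>(set Spost) = A \<union> label (T (Suc n))"
      proof -
        have "\<Union>(set Spre) \<union> \<Union>(set B) \<union> \<Union>(set Spost) = (\<Union>i\<in>{1..n}. label (T' i))"
          using bc_cover_union[OF IH(1) n1] .
        thus ?thesis using IH(2) bc_union[OF Bc] UT' by auto
      qed
      have d1: "dvec_c Fh (Spost @ [L]) = dvec_c Fh Spost + n_comp (gminus (label (T n)) (A \<union> label (T (Suc n))))"
        using dvec_snoc[of Fh Spost L] U L gminus_union[of A "A \<union> label (T (Suc n))" "label (T n)"] neA
        by auto
      have U2: "Fh \<union> \<Union>(set (map f [h+1..<n+1])) = A \<union> label (T (Suc n))"
      proof -
        have "Fh \<union> \<Union>(set (map f [h+1..<n+1])) = (\<Union>i\<in>{1..n}. f i)"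
          unfolding Fh_def UN_set_map using UN_split[OF hn] by simp
        also have "\<dots> = (\<Union>j\<in>{1..Suc n} - {n}. label (T j))" unfolding f_def
          using UN_tau[OF spp_img_lt[OF sp], of "\<lambda>j. label (T j)"] tm
          by (simp add: atLeastLessThanSuc_atLeastAtMost)
        also have "{1..Suc n} - {n} = insert (Suc n) {1..<n}" by auto
        finally show ?thesis by (auto simp: A_def)
      qed
      have d2: "dvec_c Fh (map f [h+1..<Suc n+1]) = dvec_c Fh (map f [h+1..<n+1])
          + n_comp (gminus (label (T n)) (A \<union> label (T (Suc n))))"
        unfolding upt_h using dvec_snoc[of Fh "map f [h+1..<n+1]" "f (Suc n)"] U2 tm
        by (simp add: f_def)
      have c3: "dvec_c Fh (map f [h+1..<Suc n+1]) \<le> dvec_c Fh (Spost @ [L])"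
        using d1 d2 IH(3) by linarith
      show ?thesis using c1 IH(2) c3 IH(4) Qc' unfolding f_def Fh_def
        by (intro exI[of _ Spre] exI[of _ "Spost @ [L]"]) simp
    qed
  qed
qed

definition nxt :: "nat set \<Rightarrow> nat \<Rightarrow> nat" where
  "nxt I j = Min {i \<in> I. j \<le> i}"

definition sg :: "nat set \<Rightarrow> nat \<Rightarrow> nat" where
  "sg I j = (if j - 1 \<in> insert 0 I then nxt I j else j - 1)"

definition valid :: "nat \<Rightarrow> nat set \<Rightarrow> bool" where
  "valid m I \<longleftrightarrow> I \<subseteq> {1..m} \<and> m \<in> I"

lemma valid_fin: "valid m I \<Longrightarrow> finite I"
  unfolding valid_def using finite_subset by blast

lemma nxt_eq: "finite I \<Longrightarrow> i \<in> I \<Longrightarrow> j \<le> i \<Longrightarrow> (\<forall>x\<in>I. j \<le> x \<longrightarrow> i \<le> x) \<Longrightarrow> nxt I j = i"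
  unfolding nxt_def by (intro Min_eqI) auto

lemma nxt_props:
  assumes "finite I" "i \<in> I" "j \<le> i"
  shows "nxt I j \<in> I" "j \<le> nxt I j" "\<forall>x\<in>I. j \<le> x \<longrightarrow> nxt I j \<le> x"
proof -
  have f: "finite {x \<in> I. j \<le> x}" "{x \<in> I. j \<le> x} \<noteq> {}" using assms by auto
  show "nxt I j \<in> I" "j \<le> nxt I j" using Min_in[OF f] unfolding nxt_def by auto
  show "\<forall>x\<in>I. j \<le> x \<longrightarrow> nxt I j \<le> x" using Min_le[OF f(1)] unfolding nxt_def by auto
qed

lemma ss_mono:
  fixes xs :: "nat list"
  assumes "sorted_wrt (<) xs" "i < length xs" "l < length xs"
  shows "(xs ! i < xs ! l) \<longleftrightarrow> i < l"
proof
  assume a: "xs ! i < xs ! l"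
  show "i < l"
  proof (rule ccontr)
    assume "\<not> i < l"
    hence "l < i \<or> l = i" by auto
    thus False
    proof
      assume "l < i"
      hence "xs ! l < xs ! i" using sorted_wrt_nth_less[OF assms(1) _ assms(2)] by blast
      thus False using a by simp
    qed (use a in simp)
  qed
next
  assume "i < l" thus "xs ! i < xs ! l" using sorted_wrt_nth_less[OF assms(1) _ assms(3)] by blast
qed

lemma ss_eq:
  fixes xs :: "nat list"
  assumes "sorted_wrt (<) xs" "i < length xs" "l < length xs" "xs ! i = xs ! l"
  shows "i = l"
proof -
  have "\<not> i < l" "\<not> l < i" using ss_mono[OF assms(1,2,3)] ss_mono[OF assms(1,3,2)] assms(4) by auto
  thus ?thesis by simp
qed

lemma xs_props:
  assumes "valid m I"
  defines "xs \<equiv> 0 # sorted_list_of_set I"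
  shows "sorted_wrt (<) xs" "set xs = insert 0 I" "\<And>k. 1 \<le> k \<Longrightarrow> k < length xs \<Longrightarrow> xs ! k \<in> I"
    "xs ! 0 = 0"
proof -
  have fin: "finite I" using valid_fin[OF assms(1)] .
  have pos: "\<forall>x\<in>I. 0 < x" using assms(1) unfolding valid_def by auto
  show "sorted_wrt (<) xs" unfolding xs_def using strict_sorted_list_of_set[of I] pos fin by simp
  show "set xs = insert 0 I" unfolding xs_def using fin by simp
  show "xs ! 0 = 0" unfolding xs_def by simp
  fix k assume k: "1 \<le> k" "k < length xs"
  hence "xs ! k = sorted_list_of_set I ! (k - 1)" "k - 1 < length (sorted_list_of_set I)"
    unfolding xs_def by (auto simp: nth_Cons')
  thus "xs ! k \<in> I" using fin by (metis nth_mem set_sorted_list_of_set)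
qed

lemma sigma_I_char:
  assumes v: "valid m I" and j: "j \<in> {1..m}"
  shows "sigma_I I j = sg I j"
proof -
  define xs where "xs = 0 # sorted_list_of_set I"
  note X = xs_props[OF v, folded xs_def]
  have fin: "finite I" using valid_fin[OF v] .
  define P where "P = (\<lambda>h. 1 \<le> h \<and> h < length xs \<and> j = xs ! (h - 1) + 1)"
  have sI: "sigma_I I j = (if \<exists>h. P h then xs ! (THE h. P h) else j - 1)"
    unfolding sigma_I_def xs_def[symmetric] P_def Let_def by simp
  show ?thesis
  proof (cases "j - 1 \<in> insert 0 I")
    case True
    hence "j - 1 \<in> set xs" using X(2) by simp
    then obtain k where k: "k < length xs" "xs ! k = j - 1" by (auto simp: in_set_conv_nth)
    have "m \<in> set xs" using v X(2) unfolding valid_def by auto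
    then obtain l where l: "l < length xs" "xs ! l = m" by (auto simp: in_set_conv_nth)
    have "k < l" using ss_mono[OF X(1) k(1) l(1)] k l j by auto
    hence k1: "k + 1 < length xs" using l by simp
    have Pk: "P (k + 1)" unfolding P_def using k k1 j by auto
    have uniq: "h = k + 1" if "P h" for h
    proof -
      have "h - 1 < length xs" "xs ! (h - 1) = xs ! k" using that k j unfolding P_def by auto
      hence "h - 1 = k" using ss_eq[OF X(1) _ k(1)] by blast
      thus ?thesis using that unfolding P_def by auto
    qed
    have the: "(THE h. P h) = k + 1" by (rule the_equality[of P "k + 1", OF Pk uniq])
    have "xs ! (k + 1) = nxt I j"
    proof (rule nxt_eq[OF fin, symmetric])
      show "xs ! (k + 1) \<in> I" using X(3)[of "k+1"] k1 by simp
      have "xs ! k < xs ! (k + 1)" using ss_mono[OF X(1) k(1) k1] by simp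
      thus "j \<le> xs ! (k + 1)" using k j by auto
      show "\<forall>x\<in>I. j \<le> x \<longrightarrow> xs ! (k + 1) \<le> x"
      proof (intro ballI impI)
        fix x assume x: "x \<in> I" "j \<le> x"
        hence "x \<in> set xs" using X(2) by simp
        then obtain q where q: "q < length xs" "xs ! q = x" by (auto simp: in_set_conv_nth)
        have "xs ! k < xs ! q" using k q x j by auto
        hence "k < q" using ss_mono[OF X(1) k(1) q(1)] by simp
        hence "k + 1 = q \<or> k + 1 < q" by auto
        thus "xs ! (k + 1) \<le> x"
        proof
          assume "k + 1 < q" thus ?thesis using ss_mono[OF X(1) k1 q(1)] q by simp
        qed (use q in simp)
      qed
    qed
    thus ?thesis using sI Pk the True unfolding sg_def by auto
  next
    case False
    have "\<not> (\<exists>h. P h)"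
    proof
      assume "\<exists>h. P h"
      then obtain h where "P h" by blast
      hence "j - 1 = xs ! (h - 1)" "h - 1 < length xs" unfolding P_def by auto
      hence "j - 1 \<in> set xs" by simp
      thus False using False X(2) by simp
    qed
    thus ?thesis using sI False unfolding sg_def by simp
  qed
qed

lemma tilde_char_in:
  assumes v: "valid m I" and jI: "j \<in> I" and p: "p \<in> insert 0 I" "p < j"
    and gap: "\<forall>x\<in>I. p < x \<longrightarrow> j \<le> x"
  shows "tilde_I I j = I \<union> {1..p}"
proof -
  define xs where "xs = 0 # sorted_list_of_set I"
  note X = xs_props[OF v, folded xs_def]
  have fin: "finite I" using valid_fin[OF v] .
  have "j \<in> set xs" using X(2) jI by simp
  then obtain k where k: "k < length xs" "xs ! k = j" by (auto simp: in_set_conv_nth)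
  have "p \<in> set xs" using X(2) p(1) by simp
  then obtain q where q: "q < length xs" "xs ! q = p" by (auto simp: in_set_conv_nth)
  have "k \<noteq> 0"
  proof
    assume "k = 0" hence "j = 0" using k X(4) by simp
    thus False using p(2) by simp
  qed
  hence k1: "1 \<le> k" by simp
  have qk: "q < k" using ss_mono[OF X(1) q(1) k(1)] q k p by simp
  have "q + 1 = k"
  proof (rule ccontr)
    assume "q + 1 \<noteq> k"
    hence a: "q + 1 < k" using qk by simp
    hence b: "q + 1 < length xs" using k by simp
    have "xs ! (q + 1) \<in> I" using X(3)[of "q+1"] b by simp
    moreover have "p < xs ! (q + 1)" using ss_mono[OF X(1) q(1) b] q by simp
    ultimately have "j \<le> xs ! (q + 1)" using gap by blast
    moreover have "xs ! (q + 1) < j" using ss_mono[OF X(1) b k(1)] a k by simp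
    ultimately show False by simp
  qed
  hence qq: "xs ! (k - 1) = p" using q by auto
  have uniq: "h = k" if "1 \<le> h \<and> h < length xs \<and> xs ! h = j" for h
    using ss_eq[OF X(1), of h k] that k by auto
  have Pk: "1 \<le> k \<and> k < length xs \<and> xs ! k = j" using k k1 by simp
  have the: "(THE h. 1 \<le> h \<and> h < length xs \<and> xs ! h = j) = k"
    by (rule the_equality[of "\<lambda>h. 1 \<le> h \<and> h < length xs \<and> xs ! h = j" k, OF Pk uniq])
  show ?thesis unfolding tilde_I_def Let_def xs_def[symmetric] using jI the qq by simp
qed

lemma tilde_char_notin: "j \<notin> I \<Longrightarrow> tilde_I I j = I \<union> {1..j - 1}"
  unfolding tilde_I_def Let_def by simp

lemma nxt_m: "valid m I \<Longrightarrow> j \<le> m \<Longrightarrow> nxt I j \<in> I \<and> j \<le> nxt I j \<and> (\<forall>x\<in>I. j \<le> x \<longrightarrow> nxt I j \<le> x)"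
  using nxt_props[OF valid_fin, of m I m j] unfolding valid_def by auto

lemma sg_spp: assumes v: "valid m I" shows "spp m (sigma_I I)"
proof -
  have ch: "sigma_I I j = sg I j" if "j \<in> {1..m}" for j using sigma_I_char[OF v that] .
  have r: "sg I j \<in> {1..m} \<and> j - 1 \<le> sg I j" if j: "j \<in> {1..m}" for j
  proof (cases "j - 1 \<in> insert 0 I")
    case True
    thus ?thesis using nxt_m[OF v, of j] j v unfolding sg_def valid_def by auto
  next
    case False
    hence "j \<ge> 2" using j by (cases "j = 1") auto
    thus ?thesis using False j unfolding sg_def by auto
  qed
  have inj: "inj_on (sg I) {1..m}"
  proof (rule inj_onI)
    fix x y assume x: "x \<in> {1..m}" and y: "y \<in> {1..m}" and e: "sg I x = sg I y"
    show "x = y"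
    proof (rule ccontr)
      assume ne: "x \<noteq> y"
      { fix a b assume a: "a \<in> {1..m}" and b: "b \<in> {1..m}" and ab: "a < b" and e: "sg I a = sg I b"
        have False
        proof (cases "a - 1 \<in> insert 0 I")
          case ja: True
          hence sa: "sg I a = nxt I a" by (simp add: sg_def)
          have na: "nxt I a \<in> I" "a \<le> nxt I a" "\<forall>x\<in>I. a \<le> x \<longrightarrow> nxt I a \<le> x"
            using nxt_m[OF v, of a] a by auto
          show False
          proof (cases "b - 1 \<in> insert 0 I")
            case True
            hence "b - 1 \<in> I" using ab a by auto
            hence "nxt I a \<le> b - 1" using na(3) ab by auto
            moreover have "b \<le> nxt I b" using nxt_m[OF v, of b] b by auto
            moreover have "sg I b = nxt I b" using True by (simp add: sg_def)
            moreover have "1 \<le> b" using b by simp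
            ultimately show False using e sa by linarith
          next
            case False
            hence "nxt I a = b - 1" using e sa by (simp add: sg_def)
            thus False using na(1) False by auto
          qed
        next
          case ja: False
          show False
          proof (cases "b - 1 \<in> insert 0 I")
            case True
            hence "sg I b = nxt I b" "b \<le> nxt I b" using nxt_m[OF v, of b] b by (auto simp: sg_def)
            moreover have "sg I a = a - 1" using ja by (simp add: sg_def)
            ultimately show False using e ab by auto
          next
            case False
            have "sg I a = a - 1" using ja unfolding sg_def by (simp only: if_False)
            moreover have "sg I b = b - 1" using False unfolding sg_def by (simp only: if_False)
            moreover have "1 \<le> a" using a by simp
            ultimately show False using ab e by linarith
          qed
        qed }
      note * = this
      show False using ne x y e *[of x y] *[of y x] by (cases "x < y") auto
    qed
  qed
  have inj2: "inj_on (sigma_I I) {1..m}" using inj inj_on_cong[of "{1..m}" "sigma_I I" "sg I"] ch by blast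
  show ?thesis unfolding spp_def using r ch inj2 by auto
qed

lemma sg_img:
  assumes v: "valid m I"
  shows "k \<le> m \<Longrightarrow> sigma_I I ` {1..k} = (if k \<in> insert 0 I then {1..k} else insert (nxt I k) {1..k-1})"
proof (induction k)
  case 0 thus ?case by simp
next
  case (Suc k)
  have fin: "finite I" using valid_fin[OF v] .
  have IH: "sigma_I I ` {1..k} = (if k \<in> insert 0 I then {1..k} else insert (nxt I k) {1..k-1})"
    using Suc by simp
  have s: "sigma_I I (Suc k) = sg I (Suc k)" using sigma_I_char[OF v] Suc.prems by simp
  have img: "sigma_I I ` {1..Suc k} = insert (sg I (Suc k)) (sigma_I I ` {1..k})"
    using s by (auto simp: atLeastAtMostSuc_conv)
  show ?case
  proof (cases "k \<in> insert 0 I")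
    case True
    hence sk: "sg I (Suc k) = nxt I (Suc k)" by (simp add: sg_def)
    show ?thesis
    proof (cases "Suc k \<in> I")
      case True
      have "nxt I (Suc k) = Suc k" using nxt_eq[OF fin True] by auto
      thus ?thesis using img sk IH \<open>k \<in> insert 0 I\<close> True by (auto simp: atLeastAtMostSuc_conv)
    next
      case False
      thus ?thesis using img sk IH \<open>k \<in> insert 0 I\<close> by auto
    qed
  next
    case False
    hence k1: "k \<ge> 1" by (cases k) auto
    have sk: "sg I (Suc k) = k" using False by (simp add: sg_def)
    have e: "{1..k} = insert k {1..k-1}" using k1 by auto
    have img2: "sigma_I I ` {1..Suc k} = insert (nxt I k) {1..k}"
      using img sk IH False e by auto
    show ?thesis
    proof (cases "Suc k \<in> I")
      case True
      have "\<forall>x\<in>I. k \<le> x \<longrightarrow> Suc k \<le> x"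
      proof (intro ballI impI)
        fix x assume "x \<in> I" "k \<le> x"
        hence "x \<noteq> k" using False by auto
        thus "Suc k \<le> x" using \<open>k \<le> x\<close> by simp
      qed
      hence "nxt I k = Suc k" using nxt_eq[OF fin True, of k] by simp
      thus ?thesis using img2 True by (auto simp: atLeastAtMostSuc_conv)
    next
      case F2: False
      have "{i \<in> I. k \<le> i} = {i \<in> I. Suc k \<le> i}" using False by (auto simp: Suc_le_eq le_less)
      hence "nxt I k = nxt I (Suc k)" by (simp add: nxt_def)
      thus ?thesis using img2 F2 by simp
    qed
  qed
qed

lemma shift_spp: "shift_perm m \<sigma> \<Longrightarrow> spp m \<sigma>"
  unfolding shift_perm_def spp_def
  using permutes_imp_bij bij_betw_apply bij_betw_imp_inj_on by metis

lemma sg_exists: "m \<ge> 1 \<Longrightarrow> spp m \<sigma> \<Longrightarrow> \<exists>I. valid m I \<and> (\<forall>j\<in>{1..m}. \<sigma> j = sg I j)"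
proof (induction m arbitrary: \<sigma>)
  case 0 thus ?case by simp
next
  case (Suc n)
  note sp = Suc.prems(2)
  show ?case
  proof (cases "n = 0")
    case True
    have "\<sigma> 1 = 1" using sp True unfolding spp_def by auto
    moreover have "sg {1} 1 = 1" unfolding sg_def using nxt_eq[of "{1}" 1 1] by simp
    ultimately show ?thesis using True by (intro exI[of _ "{1}"]) (auto simp: valid_def)
  next
    case False
    hence n1: "n \<ge> 1" by simp
    have lastc: "\<sigma> (Suc n) = Suc n \<or> \<sigma> (Suc n) = n" using spp_last[OF sp] by simp
    show ?thesis
    proof (cases "\<sigma> (Suc n) = Suc n")
      case tm: True
      have sp': "spp n \<sigma>" using spp_peel1[OF sp tm] by simp
      obtain I' where I': "valid n I'" "\<forall>j\<in>{1..n}. \<sigma> j = sg I' j" using Suc.IH[OF n1 sp'] by blast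
      define I where "I = insert (Suc n) I'"
      have fI: "finite I" "finite I'" using valid_fin[OF I'(1)] by (auto simp: I_def)
      have v: "valid (Suc n) I" using I'(1) unfolding valid_def I_def by auto
      have "\<sigma> j = sg I j" if j: "j \<in> {1..Suc n}" for j
      proof (cases "j = Suc n")
        case True
        have "n \<in> insert 0 I" using I'(1) unfolding valid_def I_def by auto
        moreover have "nxt I (Suc n) = Suc n" using nxt_eq[OF fI(1), of "Suc n" "Suc n"] by (auto simp: I_def)
        ultimately show ?thesis using True tm unfolding sg_def by simp
      next
        case False
        hence jn: "j \<in> {1..n}" using j by auto
        have mem: "(j - 1 \<in> insert 0 I) = (j - 1 \<in> insert 0 I')" using jn by (auto simp: I_def)
        have "nxt I j = nxt I' j"
        proof (rule nxt_eq[OF fI(1)])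
          have N: "nxt I' j \<in> I' \<and> j \<le> nxt I' j \<and> (\<forall>x\<in>I'. j \<le> x \<longrightarrow> nxt I' j \<le> x)"
            using nxt_m[OF I'(1), of j] jn by auto
          have "nxt I' j \<le> n" using N I'(1) unfolding valid_def by auto
          thus "nxt I' j \<in> I" "j \<le> nxt I' j" "\<forall>x\<in>I. j \<le> x \<longrightarrow> nxt I' j \<le> x"
            using N by (auto simp: I_def)
        qed
        thus ?thesis using I'(2) jn mem unfolding sg_def by simp
      qed
      thus ?thesis using v by blast
    next
      case tm: False
      hence tm: "\<sigma> (Suc n) = n" using lastc by simp
      define \<sigma>' where "\<sigma>' = (\<lambda>i. if \<sigma> i = Suc n then n else \<sigma> i)"
      have m2: "Suc n \<ge> 2" using n1 by simp
      have X: "spp (Suc n - 1) (\<lambda>i. if \<sigma> i = Suc n then Suc n - 1 else \<sigma> i)"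
        by (rule spp_peel2[OF sp _ m2]) (simp add: tm)
      have sp': "spp n \<sigma>'" using X unfolding \<sigma>'_def diff_Suc_1 .
      obtain I' where I': "valid n I'" "\<forall>j\<in>{1..n}. \<sigma>' j = sg I' j" using Suc.IH[OF n1 sp'] by blast
      define I where "I = insert (Suc n) (I' - {n})"
      have fI: "finite I" "finite I'" using valid_fin[OF I'(1)] by (auto simp: I_def)
      have v: "valid (Suc n) I" using I'(1) unfolding valid_def I_def by auto
      have "\<sigma> j = sg I j" if j: "j \<in> {1..Suc n}" for j
      proof (cases "j = Suc n")
        case True
        have "n \<notin> insert 0 I" using n1 by (auto simp: I_def)
        thus ?thesis using True tm unfolding sg_def by simp
      next
        case False
        hence jn: "j \<in> {1..n}" using j by auto
        have sn: "\<sigma> j \<noteq> n" using spp_ne[OF sp, of j "Suc n"] tm jn by auto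
        have sj: "\<sigma> j = (if \<sigma>' j = n then Suc n else \<sigma>' j)" using sn by (auto simp: \<sigma>'_def)
        have mem: "(j - 1 \<in> insert 0 I) = (j - 1 \<in> insert 0 I')" using jn by (auto simp: I_def)
        have N: "nxt I' j \<in> I' \<and> j \<le> nxt I' j \<and> (\<forall>x\<in>I'. j \<le> x \<longrightarrow> nxt I' j \<le> x)"
          using nxt_m[OF I'(1), of j] jn by auto
        have Nn: "nxt I' j \<le> n" using N I'(1) unfolding valid_def by auto
        have nx: "nxt I j = (if nxt I' j = n then Suc n else nxt I' j)"
        proof (cases "nxt I' j = n")
          case True
          have "nxt I j = Suc n"
          proof (rule nxt_eq[OF fI(1)])
            show "Suc n \<in> I" "j \<le> Suc n" using jn by (auto simp: I_def)
            show "\<forall>x\<in>I. j \<le> x \<longrightarrow> Suc n \<le> x"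
            proof (intro ballI impI)
              fix x assume x: "x \<in> I" "j \<le> x"
              show "Suc n \<le> x"
              proof (cases "x = Suc n")
                case False
                hence "x \<in> I'" "x \<noteq> n" using x by (auto simp: I_def)
                moreover have "x \<le> n" using \<open>x \<in> I'\<close> I'(1) unfolding valid_def by auto
                moreover have "n \<le> x" using N True \<open>x \<in> I'\<close> x(2) by auto
                ultimately show ?thesis by simp
              qed simp
            qed
          qed
          thus ?thesis using True by simp
        next
          case False
          have "nxt I j = nxt I' j"
          proof (rule nxt_eq[OF fI(1)])
            show "nxt I' j \<in> I" "j \<le> nxt I' j" using N False by (auto simp: I_def)
            show "\<forall>x\<in>I. j \<le> x \<longrightarrow> nxt I' j \<le> x" using N Nn by (auto simp: I_def)
          qed
          thus ?thesis using False by simp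
        qed
        show ?thesis
        proof (cases "j - 1 \<in> insert 0 I'")
          case True
          hence "\<sigma>' j = nxt I' j" using I'(2) jn unfolding sg_def by simp
          thus ?thesis using sj nx mem True unfolding sg_def by simp
        next
          case False
          hence "\<sigma>' j = j - 1" using I'(2) jn unfolding sg_def by simp
          moreover have "j - 1 \<noteq> n" using jn by auto
          ultimately show ?thesis using sj mem False unfolding sg_def by simp
        qed
      qed
      thus ?thesis using v by blast
    qed
  qed
qed

lemma valid_recover:
  assumes v: "valid m I"
  shows "I = {sg I j | j. j \<in> {1..m} \<and> j \<le> sg I j}"
proof
  show "{sg I j | j. j \<in> {1..m} \<and> j \<le> sg I j} \<subseteq> I"
  proof
    fix x assume "x \<in> {sg I j | j. j \<in> {1..m} \<and> j \<le> sg I j}"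
    then obtain j where j: "j \<in> {1..m}" "j \<le> sg I j" "x = sg I j" by blast
    have "j - 1 \<in> insert 0 I"
    proof (rule ccontr)
      assume "j - 1 \<notin> insert 0 I"
      hence sj: "sg I j = j - 1" by (simp add: sg_def)
      have "j \<le> j - 1" using j(2) unfolding sj .
      moreover have "1 \<le> j" using j(1) by simp
      ultimately show False by linarith
    qed
    hence "x = nxt I j" using j by (simp add: sg_def)
    thus "x \<in> I" using nxt_m[OF v, of j] j by auto
  qed
next
  show "I \<subseteq> {sg I j | j. j \<in> {1..m} \<and> j \<le> sg I j}"
  proof
    fix i assume i: "i \<in> I"
    have fin: "finite I" using valid_fin[OF v] .
    define p where "p = Max (insert 0 {x \<in> I. x < i})"
    have pf: "finite (insert 0 {x \<in> I. x < i})" using fin by auto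
    have pin: "p \<in> insert 0 {x \<in> I. x < i}" unfolding p_def using Max_in[OF pf] by blast
    have im: "i \<in> {1..m}" using i v unfolding valid_def by auto
    hence pi: "p < i" using pin by auto
    have pI: "p \<in> insert 0 I" using pin by auto
    have pmax: "x \<le> p" if "x \<in> I" "x < i" for x unfolding p_def using Max_ge[OF pf] that by auto
    define j where "j = p + 1"
    have j: "j \<in> {1..m}" "j - 1 \<in> insert 0 I" using pi im pI by (auto simp: j_def)
    have "nxt I j = i"
    proof (rule nxt_eq[OF fin i])
      show "j \<le> i" using pi by (simp add: j_def)
      show "\<forall>x\<in>I. j \<le> x \<longrightarrow> i \<le> x"
      proof (intro ballI impI)
        fix x assume "x \<in> I" "j \<le> x"
        thus "i \<le> x" using pmax[of x] by (force simp: j_def)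
      qed
    qed
    hence "sg I j = i" using j by (simp add: sg_def)
    thus "i \<in> {sg I j | j. j \<in> {1..m} \<and> j \<le> sg I j}" using j pi by (force simp: j_def)
  qed
qed

lemma index_set_props:
  assumes sp: "shift_perm m \<sigma>" and m1: "m \<ge> 1"
  shows "valid m (index_set m \<sigma>) \<and> (\<forall>j\<in>{1..m}. \<sigma> j = sg (index_set m \<sigma>) j)"
proof -
  obtain I where I: "valid m I" "\<forall>j\<in>{1..m}. \<sigma> j = sg I j" using sg_exists[OF m1 shift_spp[OF sp]] by blast
  define Q where "Q = (\<lambda>I. I \<subseteq> {1..m} \<and> m \<in> I \<and> (\<forall>j \<in> {1..m}. \<sigma> j = sigma_I I j))"
  have QI: "Q I" using I sigma_I_char[OF I(1)] unfolding Q_def valid_def by auto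
  have uniq: "I' = I" if "Q I'" for I'
  proof -
    have v': "valid m I'" using that unfolding Q_def valid_def by auto
    have e: "\<forall>j\<in>{1..m}. sg I' j = sg I j" using that I(2) sigma_I_char[OF v'] unfolding Q_def by auto
    have "{sg I' j | j. j \<in> {1..m} \<and> j \<le> sg I' j} = {sg I j | j. j \<in> {1..m} \<and> j \<le> sg I j}"
      using e by force
    thus ?thesis using valid_recover[OF v'] valid_recover[OF I(1)] by simp
  qed
  have "index_set m \<sigma> = I" unfolding index_set_def Q_def[symmetric]
    by (rule the_equality[of Q I, OF QI uniq])
  thus ?thesis using I by simp
qed

lemma nxt_self: "finite I \<Longrightarrow> i \<in> I \<Longrightarrow> nxt I i = i"
  using nxt_eq[of I i i] by auto

lemma tilde_facts:
  assumes sp: "shift_perm m \<sigma>" and h: "h \<in> {1..m}"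
  defines "\<tau> \<equiv> sigma_tilde m \<sigma> (\<sigma> h)"
  shows "spp m \<tau> \<and> \<tau> h = \<sigma> h \<and> Qc \<tau> h \<and> \<tau> ` {1..<h} = \<sigma> ` {1..<h}"
proof -
  have m1: "m \<ge> 1" using h by simp
  define I where "I = index_set m \<sigma>"
  have v: "valid m I" and sgI: "\<forall>j\<in>{1..m}. \<sigma> j = sg I j"
    using index_set_props[OF sp m1] unfolding I_def by auto
  have fin: "finite I" using valid_fin[OF v] .
  have sI: "\<forall>j\<in>{1..m}. \<sigma> j = sigma_I I j" using sgI sigma_I_char[OF v] by simp
  define j where "j = \<sigma> h"
  have tau: "\<tau> = sigma_I (tilde_I I j)" unfolding \<tau>_def sigma_tilde_def I_def j_def ..
  have hle: "h \<le> m" "1 \<le> h" using h by auto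
  have hm1: "h - 1 \<le> m" using hle by linarith
  have imgs: "\<sigma> ` {1..h-1} = sigma_I I ` {1..h-1}"
    using sI h by (intro image_cong) auto
  have lt: "{1..<h} = {1..h-1}" by auto
  show ?thesis
  proof (cases "h - 1 \<in> insert 0 I")
    case A: True
    have jn: "j = nxt I h" using sgI h A unfolding j_def sg_def by simp
    have N: "nxt I h \<in> I" "h \<le> nxt I h" "\<forall>x\<in>I. h \<le> x \<longrightarrow> nxt I h \<le> x"
      using nxt_m[OF v, of h] h by auto
    have Ieq: "tilde_I I j = I \<union> {1..h-1}"
    proof (rule tilde_char_in[OF v])
      show "j \<in> I" using N jn by simp
      show "h - 1 \<in> insert 0 I" using A .
      show "h - 1 < j" using N jn h by auto
      show "\<forall>x\<in>I. h - 1 < x \<longrightarrow> j \<le> x" using N jn by auto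
    qed
    define J where "J = I \<union> {1..h-1}"
    have vJ: "valid m J" using v h unfolding valid_def J_def by auto
    have finJ: "finite J" using valid_fin[OF vJ] .
    have tJ: "\<tau> = sigma_I J" using tau Ieq J_def by simp
    have tsg: "\<tau> i = sg J i" if "i \<in> {1..m}" for i using sigma_I_char[OF vJ that] tJ by simp
    have c1: "spp m \<tau>" using sg_spp[OF vJ] tJ by simp
    have c2: "\<tau> h = \<sigma> h"
    proof -
      have "h - 1 \<in> insert 0 J" using A by (auto simp: J_def)
      hence "\<tau> h = nxt J h" using tsg[OF h] by (simp add: sg_def)
      also have "nxt J h = nxt I h"
        using N h by (intro nxt_eq[OF finJ]) (auto simp: J_def)
      finally show ?thesis using jn j_def by simp
    qed
    have c3: "Qc \<tau> h"
    proof -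
      have "\<tau> i = i" if "1 \<le> i" "i < h" for i
      proof -
        have "i \<in> {1..m}" using that h by auto
        moreover have "i - 1 \<in> insert 0 J" using that by (auto simp: J_def)
        moreover have "nxt J i = i"
        proof -
          have "i \<le> h - 1" using that by linarith
          hence "i \<in> J" using that by (simp add: J_def)
          thus ?thesis using nxt_self[OF finJ] by simp
        qed
        ultimately show ?thesis using tsg by (simp add: sg_def)
      qed
      thus ?thesis unfolding Qc_def by blast
    qed
    have c4: "\<tau> ` {1..<h} = \<sigma> ` {1..<h}"
    proof -
      have AJ: "h - 1 \<in> insert 0 J" using A by (auto simp: J_def)
      have "\<tau> ` {1..h-1} = {1..h-1}" using sg_img[OF vJ hm1] tJ AJ by simp
      moreover have "\<sigma> ` {1..h-1} = {1..h-1}" using sg_img[OF v hm1] imgs A by simp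
      ultimately show ?thesis using lt by simp
    qed
    show ?thesis using c1 c2 c3 c4 by blast
  next
    case B: False
    have jh: "j = h - 1" using sgI h B unfolding j_def sg_def by simp
    have h2: "h \<ge> 2" using B h by (cases "h = 1") auto
    have jI: "j \<notin> I" using B jh by simp
    define J where "J = I \<union> {1..h-2}"
    have Ieq: "tilde_I I j = J" using tilde_char_notin[OF jI] jh by (simp add: J_def numeral_2_eq_2)
    have vJ: "valid m J" using v h unfolding valid_def J_def by auto
    have finJ: "finite J" using valid_fin[OF vJ] .
    have tJ: "\<tau> = sigma_I J" using tau Ieq by simp
    have tsg: "\<tau> i = sg J i" if "i \<in> {1..m}" for i using sigma_I_char[OF vJ that] tJ by simp
    have c1: "spp m \<tau>" using sg_spp[OF vJ] tJ by simp
    have BJ: "h - 1 \<notin> insert 0 J" using B h2 by (auto simp: J_def)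
    have c2: "\<tau> h = \<sigma> h"
      using tsg[OF h] BJ jh j_def by (simp add: sg_def)
    have c3: "Qc \<tau> h"
    proof -
      have "\<tau> i = i" if "1 \<le> i" "i < h - 1" for i
      proof -
        have "i \<in> {1..m}" using that h by auto
        moreover have "i - 1 \<in> insert 0 J" using that by (auto simp: J_def)
        moreover have "nxt J i = i"
        proof -
          have "i \<le> h - 2" using that by linarith
          hence "i \<in> J" using that by (simp add: J_def)
          thus ?thesis using nxt_self[OF finJ] by simp
        qed
        ultimately show ?thesis using tsg by (simp add: sg_def)
      qed
      moreover have "\<tau> h = h - 1" using c2 jh j_def by simp
      ultimately show ?thesis unfolding Qc_def using h2 by blast
    qed
    have c4: "\<tau> ` {1..<h} = \<sigma> ` {1..<h}"
    proof -
      have hh: "h - 1 \<le> m" "h - 1 - 1 = h - 2" using hle by linarith+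
      have N: "nxt I (h - 1) \<in> I" "h - 1 \<le> nxt I (h - 1)" "\<forall>x\<in>I. h - 1 \<le> x \<longrightarrow> nxt I (h - 1) \<le> x"
        using nxt_m[OF v, of "h - 1"] h by auto
      have nx: "nxt J (h - 1) = nxt I (h - 1)"
        using N h2 by (intro nxt_eq[OF finJ]) (auto simp: J_def)
      have "\<tau> ` {1..h-1} = insert (nxt J (h - 1)) {1..h-2}" using sg_img[OF vJ hm1] tJ BJ hh by simp
      moreover have "\<sigma> ` {1..h-1} = insert (nxt I (h - 1)) {1..h-2}" using sg_img[OF v hm1] imgs B hh by simp
      ultimately show ?thesis using lt nx by simp
    qed
    show ?thesis using c1 c2 c3 c4 by blast
  qed
qed

lemma restr_dvec:
  assumes fin: "finite G0"
  shows "(\<forall>X\<in>set L. X \<subseteq> G0) \<Longrightarrow> P \<subseteq> G0 \<Longrightarrow>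
    dvec_c (P \<inter> gminus G0 F) (map (\<lambda>X. X \<inter> gminus G0 F) L) \<le> dvec_c (F \<union> P) L"
proof (induction L arbitrary: P)
  case Nil thus ?case by simp
next
  case (Cons X L)
  let ?K = "gminus G0 F"
  have X: "X \<subseteq> G0" using Cons.prems by simp
  have a: "n_comp (gminus (X \<inter> ?K) (P \<inter> ?K)) \<le> n_comp (gminus X (F \<union> P))"
    using restr_le[OF fin X Cons.prems(2), of ?K F] by simp
  have "dvec_c ((P \<union> X) \<inter> ?K) (map (\<lambda>X. X \<inter> ?K) L) \<le> dvec_c (F \<union> (P \<union> X)) L"
    using Cons.IH[of "P \<union> X"] Cons.prems X by simp
  moreover have "(P \<union> X) \<inter> ?K = P \<inter> ?K \<union> X \<inter> ?K" "F \<union> (P \<union> X) = F \<union> P \<union> X" by auto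
  ultimately have b: "dvec_c (P \<inter> ?K \<union> X \<inter> ?K) (map (\<lambda>X. X \<inter> ?K) L) \<le> dvec_c (F \<union> P \<union> X) L" by simp
  show ?case using a b by simp
qed

lemma path_ne: "subgraph_of_path G0 \<Longrightarrow> {} \<notin> G0"
  unfolding subgraph_of_path_def path_Z_def by auto

lemma upt_split3: "1 \<le> h \<Longrightarrow> h \<le> m \<Longrightarrow> [1..<m+1] = [1..<h] @ [h] @ [h+1..<m+1]"
proof -
  assume a: "1 \<le> h" "h \<le> m"
  have "[1..<m+1] = [1..<h] @ [h..<m+1]" using a upt_add_eq_append[of 1 h "m + 1 - h"] by simp
  moreover have "[h..<m+1] = h # [h+1..<m+1]" using a upt_conv_Cons by simp
  ultimately show ?thesis by simp
qed

theorem lemma5p4: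
  fixes m :: nat and G :: "nat \<Rightarrow> graph" and T :: "nat \<Rightarrow> jtree"
    and \<sigma> :: "nat \<Rightarrow> nat" and h :: nat
  assumes "m \<ge> 1"
    and "\<And>j. j \<in> {1..m} \<Longrightarrow> subgraph_of_path (G j)"
    and "\<And>j. j \<in> {1..m} \<Longrightarrow> join_tree (G j) (T j)"
    and "shift_perm m \<sigma>"
    and "h \<in> {1..m}"
  shows
    "Psi (multi_join (map T [1..<m+1]))
       \<ge> Psi (T (\<sigma> 1)) + dvec_c (G (\<sigma> 1)) (map (\<lambda>i. G (\<sigma> i)) [2..<m+1])
     \<and>
     Psi (multi_join (map T [1..<m+1]))
       \<ge> Psi (T (\<sigma> h)) + dvec_c (\<Union>i\<in>{1..h}. G (\<sigma> i)) (map (\<lambda>i. G (\<sigma> i)) [h+1..<m+1])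
     \<and>
     (let j = \<sigma> h; F = (\<Union>i\<in>{1..h-1}. G (\<sigma> i)) in
     int (Psi (multi_join (map T [1..<m+1])))
       \<ge> int (Psi (tminus (T j) F)) - int (n_comp (gminus (G j) F))
         + int (dvec (map (\<lambda>i. G (sigma_tilde m \<sigma> j i)) [1..<m+1])))"
proof -
  note m1 = assms(1) and sp0 = assms(4) and hm = assms(5)
  define TT where "TT = multi_join (map T [1..<m+1])"
  have lab: "label (T j) = G j" if "j \<in> {1..m}" for j
    using assms(3)[OF that] unfolding join_tree_def by simp
  have neG: "{} \<notin> G j" if "j \<in> {1..m}" for j using path_ne[OF assms(2)[OF that]] .
  have finG: "finite (G j)" if "j \<in> {1..m}" for j using assms(2)[OF that] unfolding subgraph_of_path_def by simp
  have ne: "\<forall>i\<in>{1..m}. {} \<notin> label (T i)" using lab neG by simp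
  have neTT: "{} \<notin> label TT" using label_mjT[OF m1, of T] ne unfolding TT_def by auto
  have sp: "spp m \<sigma>" using shift_spp[OF sp0] .
  have srange: "\<sigma> i \<in> {1..m}" if "i \<in> {1..m}" for i using sp that unfolding spp_def by auto
  have P2: "Psi TT \<ge> Psi (T (\<sigma> k)) + dvec_c (\<Union>i\<in>{1..k}. G (\<sigma> i)) (map (\<lambda>i. G (\<sigma> i)) [k+1..<m+1])"
    if k: "k \<in> {1..m}" for k
  proof -
    obtain B0 where B0: "distinct B0" "set B0 \<in> branch_coverings (T (\<sigma> k))" "dvec B0 = Psi (T (\<sigma> k))"
      using Psi_ex by blast
    have k1: "1 \<le> k" "k \<le> m" using k by auto
    obtain Spre Spost where W: "set (Spre @ B0 @ Spost) \<in> branch_coverings TT"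
      "\<Union>(set Spre) \<union> label (T (\<sigma> k)) = (\<Union>i\<in>{1..k}. label (T (\<sigma> i)))"
      "dvec_c (\<Union>i\<in>{1..k}. label (T (\<sigma> i))) (map (\<lambda>i. label (T (\<sigma> i))) [k+1..<m+1])
         \<le> dvec_c (\<Union>i\<in>{1..k}. label (T (\<sigma> i))) Spost"
      using W[OF sp k1 ne B0(2)] unfolding TT_def by blast
    define Fk where "Fk = (\<Union>i\<in>{1..k}. label (T (\<sigma> i)))"
    have FkG: "Fk = (\<Union>i\<in>{1..k}. G (\<sigma> i))" unfolding Fk_def
      using lab srange k by (intro SUP_cong) auto
    have mapG: "map (\<lambda>i. label (T (\<sigma> i))) [k+1..<m+1] = map (\<lambda>i. G (\<sigma> i)) [k+1..<m+1]"
      using lab srange by (intro map_cong) auto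
    have setL: "set (B0 @ Spre @ Spost) \<in> branch_coverings TT"
      using W(1) by (metis Un_left_commute set_append)
    have UB0: "\<Union>(set B0) = label (T (\<sigma> k))" using bc_union[OF B0(2)] .
    have "dvec (B0 @ Spre @ Spost) = dvec B0 + dvec_c (\<Union>(set B0)) Spre + dvec_c (\<Union>(set B0) \<union> \<Union>(set Spre)) Spost"
      unfolding dvec_def by (simp add: dvec_append Un_assoc)
    also have "\<Union>(set B0) \<union> \<Union>(set Spre) = Fk" using W(2) UB0 unfolding Fk_def by auto
    finally have "dvec (B0 @ Spre @ Spost) \<ge> Psi (T (\<sigma> k)) + dvec_c Fk Spost" using B0(3) by simp
    moreover have "dvec (B0 @ Spre @ Spost) \<le> Psi TT" using Psi_ge[OF setL neTT] .
    moreover have "dvec_c Fk (map (\<lambda>i. G (\<sigma> i)) [k+1..<m+1]) \<le> dvec_c Fk Spost"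
      using W(3) unfolding mapG Fk_def[symmetric] .
    ultimately have "Psi (T (\<sigma> k)) + dvec_c Fk (map (\<lambda>i. G (\<sigma> i)) [k+1..<m+1]) \<le> Psi TT"
      by linarith
    thus ?thesis unfolding FkG .
  qed
  have one: "1 \<in> {1..m}" using m1 by simp
  have part1: "Psi TT \<ge> Psi (T (\<sigma> 1)) + dvec_c (G (\<sigma> 1)) (map (\<lambda>i. G (\<sigma> i)) [2..<m+1])"
  proof -
    have e1: "(\<Union>i\<in>{1..1::nat}. G (\<sigma> i)) = G (\<sigma> 1)" by simp
    have e2: "(1::nat) + 1 = 2" by simp
    show ?thesis using P2[OF one] unfolding e1 e2 .
  qed
  have part2: "Psi TT \<ge> Psi (T (\<sigma> h)) + dvec_c (\<Union>i\<in>{1..h}. G (\<sigma> i)) (map (\<lambda>i. G (\<sigma> i)) [h+1..<m+1])"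
    using P2[OF hm] .
  define j where "j = \<sigma> h"
  define F where "F = (\<Union>i\<in>{1..h-1}. G (\<sigma> i))"
  define \<tau> where "\<tau> = sigma_tilde m \<sigma> j"
  have TF: "spp m \<tau> \<and> \<tau> h = \<sigma> h \<and> Qc \<tau> h \<and> \<tau> ` {1..<h} = \<sigma> ` {1..<h}"
    using tilde_facts[OF sp0 hm] unfolding \<tau>_def j_def by simp
  have spt: "spp m \<tau>" and th: "\<tau> h = j" and Qt: "Qc \<tau> h" and imt: "\<tau> ` {1..<h} = \<sigma> ` {1..<h}"
    using TF j_def by auto
  have jm: "j \<in> {1..m}" using srange[OF hm] j_def by simp
  have trange: "\<tau> i \<in> {1..m}" if "i \<in> {1..m}" for i using spt that unfolding spp_def by auto
  have h1: "1 \<le> h" "h \<le> m" using hm by auto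
  define K where "K = gminus (G j) F"
  have tm: "tminus (T j) F = restrict_leaves K (T j)" unfolding tminus_def K_def lab[OF jm] ..
  obtain Cs' where Cs': "distinct Cs'" "set Cs' \<in> branch_coverings (restrict_leaves K (T j))"
      "dvec Cs' = Psi (tminus (T j) F)"
    using Psi_ex[of "tminus (T j) F"] unfolding tm by blast
  obtain C where C: "C \<in> branch_coverings (T j)" "set Cs' = (\<lambda>X. X \<inter> K) ` C"
    using Cs'(2) unfolding bc_restrict by blast
  obtain Cl where Cl: "set Cl = C" using finite_list[OF bc_finite2[OF C(1)]] by blast
  define pick where "pick = (\<lambda>Y. SOME X. X \<in> C \<and> X \<inter> K = Y)"
  have pick: "pick Y \<in> C \<and> pick Y \<inter> K = Y" if "Y \<in> set Cs'" for Y
  proof -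
    have "Y \<in> (\<lambda>X. X \<inter> K) ` C" using that C(2) by simp
    then obtain X where X: "X \<in> C" "Y = X \<inter> K" by (rule imageE)
    hence "X \<in> C \<and> X \<inter> K = Y" by simp
    hence "(SOME X. X \<in> C \<and> X \<inter> K = Y) \<in> C \<and> (SOME X. X \<in> C \<and> X \<inter> K = Y) \<inter> K = Y"
      by (rule someI[where P = "\<lambda>X. X \<in> C \<and> X \<inter> K = Y"])
    thus ?thesis unfolding pick_def .
  qed
  define B where "B = map pick Cs' @ Cl"
  have "pick ` set Cs' \<subseteq> C" using pick by blast
  hence setB: "set B = C" unfolding B_def using Cl by auto
  have mapB: "map (\<lambda>X. X \<inter> K) B = Cs' @ map (\<lambda>X. X \<inter> K) Cl"
  proof -
    have "map (\<lambda>X. X \<inter> K) (map pick Cs') = Cs'"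
      using pick by (induction Cs') auto
    thus ?thesis unfolding B_def by simp
  qed
  have BsubG: "\<forall>X\<in>set B. X \<subseteq> G j" using setB bc_sub[OF C(1)] lab[OF jm] by auto
  have psi_tm: "Psi (tminus (T j) F) \<le> dvec_c F B"
  proof -
    have "dvec_c ({} \<inter> K) (map (\<lambda>X. X \<inter> K) B) \<le> dvec_c (F \<union> {}) B"
      using restr_dvec[OF finG[OF jm] BsubG, of "{}" F] unfolding K_def by simp
    hence "dvec_c {} (Cs' @ map (\<lambda>X. X \<inter> K) Cl) \<le> dvec_c F B" using mapB by simp
    moreover have "dvec_c {} Cs' \<le> dvec_c {} (Cs' @ map (\<lambda>X. X \<inter> K) Cl)" by (simp add: dvec_append)
    ultimately show ?thesis using Cs'(3) unfolding dvec_def by simp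
  qed
  have Bc: "set B \<in> branch_coverings (T (\<tau> h))" using setB C(1) th by simp
  obtain Spre Spost where W: "set (Spre @ B @ Spost) \<in> branch_coverings TT"
      "\<Union>(set Spre) \<union> label (T (\<tau> h)) = (\<Union>i\<in>{1..h}. label (T (\<tau> i)))"
      "dvec_c (\<Union>i\<in>{1..h}. label (T (\<tau> i))) (map (\<lambda>i. label (T (\<tau> i))) [h+1..<m+1])
         \<le> dvec_c (\<Union>i\<in>{1..h}. label (T (\<tau> i))) Spost"
      "\<Union>(set Spre) = (\<Union>i\<in>{1..<h}. label (T (\<tau> i)))"
      "dvec (map (\<lambda>i. label (T (\<tau> i))) [1..<h]) \<le> dvec Spre"
    using W[OF spt h1 ne Bc] Qt unfolding TT_def by blast
  define f where "f = (\<lambda>i. label (T (\<tau> i)))"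
  define Fh where "Fh = (\<Union>i\<in>{1..h}. f i)"
  have F': "(\<Union>i\<in>{1..<h}. f i) = F"
  proof -
    have "(\<Union>i\<in>{1..<h}. f i) = (\<Union>x\<in>\<tau> ` {1..<h}. label (T x))" unfolding f_def by simp
    also have "\<dots> = (\<Union>x\<in>\<sigma> ` {1..<h}. label (T x))" using imt by simp
    also have "\<dots> = (\<Union>i\<in>{1..<h}. label (T (\<sigma> i)))" by simp
    also have "\<dots> = (\<Union>i\<in>{1..<h}. G (\<sigma> i))"
    proof (rule SUP_cong)
      fix i assume "i \<in> {1..<h}"
      hence "i \<in> {1..m}" using h1 by auto
      thus "label (T (\<sigma> i)) = G (\<sigma> i)" using lab srange by blast
    qed simp
    finally have X: "(\<Union>i\<in>{1..<h}. f i) = (\<Union>i\<in>{1..<h}. G (\<sigma> i))" .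
    have lt2: "{1..h-1} = {1..<h}" using h1 by auto
    show ?thesis unfolding F_def lt2 using X .
  qed
  have fh: "f h = G j" unfolding f_def using th lab[OF jm] by simp
  have UB: "\<Union>(set B) = G j" using bc_union[OF Bc] th lab[OF jm] by simp
  have Fh: "Fh = F \<union> G j" using W(2) W(4) F' th lab[OF jm] unfolding Fh_def f_def by simp
  have dL: "dvec (Spre @ B @ Spost) = dvec Spre + dvec_c F B + dvec_c Fh Spost"
  proof -
    have "dvec (Spre @ B @ Spost) = dvec Spre + dvec_c (\<Union>(set Spre)) B + dvec_c (\<Union>(set Spre) \<union> \<Union>(set B)) Spost"
      unfolding dvec_def by (simp add: dvec_append Un_assoc)
    thus ?thesis using W(4) F' UB Fh unfolding f_def by simp
  qed
  have dT: "dvec (map f [1..<m+1]) = dvec (map f [1..<h]) + n_comp K + dvec_c Fh (map f [h+1..<m+1])"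
  proof -
    have "dvec (map f [1..<m+1]) = dvec (map f [1..<h] @ [f h] @ map f [h+1..<m+1])"
      using upt_split3[OF h1] by simp
    also have "\<dots> = dvec (map f [1..<h]) + n_comp (gminus (f h) (\<Union>i\<in>{1..<h}. f i))
        + dvec_c ((\<Union>i\<in>{1..<h}. f i) \<union> f h) (map f [h+1..<m+1])"
      unfolding dvec_def by (simp add: dvec_append)
    finally show ?thesis using F' fh Fh unfolding K_def by simp
  qed
  have mapT: "map (\<lambda>i. G (sigma_tilde m \<sigma> j i)) [1..<m+1] = map f [1..<m+1]"
    unfolding f_def \<tau>_def[symmetric] using lab trange by (intro map_cong) auto
  have PsiL: "dvec (Spre @ B @ Spost) \<le> Psi TT" using Psi_ge[OF W(1) neTT] .
  have W3: "dvec_c Fh (map f [h+1..<m+1]) \<le> dvec_c Fh Spost"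
    using W(3) unfolding f_def[symmetric] Fh_def[symmetric] .
  have W5: "dvec (map f [1..<h]) \<le> dvec Spre" using W(5) unfolding f_def[symmetric] .
  have natineq: "Psi (tminus (T j) F) + dvec (map f [1..<m+1]) \<le> Psi TT + n_comp K"
    using PsiL dL dT psi_tm W3 W5 by linarith
  hence I: "int (Psi (tminus (T j) F)) + int (dvec (map f [1..<m+1])) \<le> int (Psi TT) + int (n_comp K)"
    by (metis of_nat_add of_nat_le_iff)
  have part3: "int (Psi TT) \<ge> int (Psi (tminus (T j) F)) - int (n_comp (gminus (G j) F))
         + int (dvec (map (\<lambda>i. G (sigma_tilde m \<sigma> j i)) [1..<m+1]))"
    unfolding mapT K_def[symmetric] using I by linarith
  show ?thesis using part1 part2 part3 unfolding TT_def[symmetric] j_def[symmetric] F_def[symmetric] Let_def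
    by simp
qed

end
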